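(* Let $n\ge 3$ and $d\ge 2$. For every biseparable state $\rho$ on $(\mathbb{C}^d)^{\otimes n}$, $$\mathcal{C}_{n-1}(\rho)\le \max[A,B],$$ where $A=d^n-2d^{n/2}+1$ and $B=(d-1)(d^{n-1}-1)+d^{n-1}-1-\frac{n}{n-1}(d^{n-3}-1)$.
   Context: Consider $n$ qudits with Hilbert space $(\mathbb{C}^d)^{\otimes n}$. Let $\lambda_0=\mathbb{1}_d$ and let $\lambda_1,\dots,\lambda_{d^2-1}$ be Hermitian traceless $d\times d$ matrices normalized so that $\mathrm{Tr}[\lambda_i\lambda_j]=d\,\delta_{ij}$. For a nonempty subset $\alpha\subseteq\{1,\dots,n\}$ and a state $\rho$ with reduced state $\rho_\alpha$, define $\|\tau_\alpha(\rho)\|^2=\sum_{(i_k)_{k\in\alpha}\in\{1,\dots,d^2-1\}^{\alpha}}\big(\mathrm{Tr}[\rho_\alpha\bigotimes_{k\in\alpha}\lambda_{i_k}]\big)^2$, and $\mathcal{C}_{n-1}(\rho)=\sum_{|\alpha|\ge n-1}\|\tau_\alpha(\rho)\|^2$. A state is biseparable if it is a convex combination of pure states each of which is a product $|\phi\rangle_\beta\otimes|\chi\rangle_{\overline{\beta}}$ for some bipartition $\{1,\dots,n\}=\beta\,\dot\cup\,\overline\beta$ into nonempty sets (the bipartition may differ between terms). *)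

theory Defs
  imports "HOL-Analysis.Analysis"
begin

text \<open>Operators on (C^d)^{\<otimes>n}
  are represented by their matrix entries M x y on configurations, vectors by
  their coordinates.\<close>

definition cfg :: "nat \<Rightarrow> nat \<Rightarrow> (nat \<Rightarrow> nat) set" where
  "cfg n d = {x. (\<forall>k<n. x k < d) \<and> (\<forall>k\<ge>n. x k = 0)}"

definition restr :: "nat set \<Rightarrow> (nat \<Rightarrow> nat) \<Rightarrow> (nat \<Rightarrow> nat)" where
  "restr \<beta> x = (\<lambda>k. if k \<in> \<beta> then x k else 0)"

definition gm_basis :: "nat \<Rightarrow> (nat \<Rightarrow> nat \<Rightarrow> nat \<Rightarrow> complex) \<Rightarrow> bool" where
  "gm_basis d lam \<longleftrightarrow>
     (\<forall>i\<in>{1..d^2-1}. \<forall>a<d. \<forall>b<d. lam i a b = cnj (lam i b a)) \<and>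
     (\<forall>i\<in>{1..d^2-1}. (\<Sum>a<d. lam i a a) = 0) \<and>
     (\<forall>i\<in>{1..d^2-1}. \<forall>j\<in>{1..d^2-1}.
        (\<Sum>a<d. \<Sum>b<d. lam i a b * lam j b a) = (if i = j then of_nat d else 0))"

definition idx_tuples :: "nat \<Rightarrow> nat set \<Rightarrow> (nat \<Rightarrow> nat) set" where
  "idx_tuples d \<alpha> = {i. (\<forall>k\<in>\<alpha>. 1 \<le> i k \<and> i k \<le> d^2 - 1) \<and> (\<forall>k. k \<notin> \<alpha> \<longrightarrow> i k = 0)}"

text \<open>Matrix entries of the operator (tensor over k in alpha of lam_{i_k}) tensor identity
  on the complement of alpha.\<close>
definition corr_op :: "nat \<Rightarrow> (nat \<Rightarrow> nat \<Rightarrow> nat \<Rightarrow> complex) \<Rightarrow> nat set \<Rightarrow> (nat \<Rightarrow> nat)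
    \<Rightarrow> (nat \<Rightarrow> nat) \<Rightarrow> (nat \<Rightarrow> nat) \<Rightarrow> complex" where
  "corr_op n lam \<alpha> i x y =
     (\<Prod>k<n. if k \<in> \<alpha> then lam (i k) (x k) (y k) else (if x k = y k then 1 else 0))"

text \<open>Tr[rho_alpha (tensor_{k in alpha} lam_{i_k})] = Tr[rho (tensor lam_{i_k} tensor 1)].\<close>
definition corr :: "nat \<Rightarrow> nat \<Rightarrow> (nat \<Rightarrow> nat \<Rightarrow> nat \<Rightarrow> complex) \<Rightarrow>
    ((nat \<Rightarrow> nat) \<Rightarrow> (nat \<Rightarrow> nat) \<Rightarrow> complex) \<Rightarrow> nat set \<Rightarrow> (nat \<Rightarrow> nat) \<Rightarrow> complex" where
  "corr n d lam \<rho> \<alpha> i = (\<Sum>x\<in>cfg n d. \<Sum>y\<in>cfg n d. \<rho> x y * corr_op n lam \<alpha> i y x)"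

text \<open>||tau_alpha(rho)||^2.  The traces are real for Hermitian rho; we take the real part.\<close>
definition tau_sq :: "nat \<Rightarrow> nat \<Rightarrow> (nat \<Rightarrow> nat \<Rightarrow> nat \<Rightarrow> complex) \<Rightarrow>
    ((nat \<Rightarrow> nat) \<Rightarrow> (nat \<Rightarrow> nat) \<Rightarrow> complex) \<Rightarrow> nat set \<Rightarrow> real" where
  "tau_sq n d lam \<rho> \<alpha> = (\<Sum>i\<in>idx_tuples d \<alpha>. (Re (corr n d lam \<rho> \<alpha> i))^2)"

definition C_nm1 :: "nat \<Rightarrow> nat \<Rightarrow> (nat \<Rightarrow> nat \<Rightarrow> nat \<Rightarrow> complex) \<Rightarrow>
    ((nat \<Rightarrow> nat) \<Rightarrow> (nat \<Rightarrow> nat) \<Rightarrow> complex) \<Rightarrow> real" where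
  "C_nm1 n d lam \<rho> = (\<Sum>\<alpha>\<in>{\<alpha>. \<alpha> \<subseteq> {..<n} \<and> card \<alpha> \<ge> n - 1}. tau_sq n d lam \<rho> \<alpha>)"

definition pure_biprod :: "nat \<Rightarrow> nat \<Rightarrow> ((nat \<Rightarrow> nat) \<Rightarrow> complex) \<Rightarrow> bool" where
  "pure_biprod n d \<psi> \<longleftrightarrow>
     (\<Sum>x\<in>cfg n d. (cmod (\<psi> x))^2) = 1 \<and>
     (\<exists>\<beta>. \<beta> \<subseteq> {..<n} \<and> \<beta> \<noteq> {} \<and> \<beta> \<noteq> {..<n} \<and>
        (\<exists>f g. \<forall>x\<in>cfg n d. \<psi> x = f (restr \<beta> x) * g (restr ({..<n} - \<beta>) x)))"

definition biseparable :: "nat \<Rightarrow> nat \<Rightarrow> ((nat \<Rightarrow> nat) \<Rightarrow> (nat \<Rightarrow> nat) \<Rightarrow> complex) \<Rightarrow> bool" where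
  "biseparable n d \<rho> \<longleftrightarrow>
     (\<exists>(m::nat) p \<psi>. (\<forall>j<m. p j \<ge> (0::real)) \<and> (\<Sum>j<m. p j) = 1 \<and>
        (\<forall>j<m. pure_biprod n d (\<psi> j)) \<and>
        (\<forall>x\<in>cfg n d. \<forall>y\<in>cfg n d.
            \<rho> x y = (\<Sum>j<m. complex_of_real (p j) * \<psi> j x * cnj (\<psi> j y))))"

end

theory Submission
  imports Defs "Jordan_Normal_Form.Determinant"
begin


definition lamE :: "(nat \<Rightarrow> nat \<Rightarrow> nat \<Rightarrow> complex) \<Rightarrow> nat \<Rightarrow> nat \<Rightarrow> nat \<Rightarrow> complex" where
 "lamE lam i a b = (if i = 0 then (if a = b then 1 else 0) else lam i a b)"

lemma lt_sq: "a < d \<Longrightarrow> b < d \<Longrightarrow> a*d+b < d*(d::nat)"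
proof -
  assume "a<d" "b<d"
  hence "a*d+b < a*d+d" by simp
  also have "\<dots> = (a+1)*d" by simp
  also have "\<dots> \<le> d*d" using \<open>a<d\<close> by (metis Suc_eq_plus1 Suc_leI mult_le_mono1)
  finally show ?thesis .
qed

lemma inj_dm: "b < d \<Longrightarrow> b' < (d::nat) \<Longrightarrow> (a'*d+b' = a*d+b) = (a = a' \<and> b = b')"
proof -
  have dm: "(x*d+y) div d = x" "(x*d+y) mod d = y" if "y < d" for x y using that by auto
  assume "b < d" "b' < d"
  thus ?thesis using dm by metis
qed

lemma sum_div_mod: fixes d :: nat and h :: "nat \<Rightarrow> nat \<Rightarrow> 'a::comm_monoid_add" shows "(\<Sum>p<d*d. h (p div d) (p mod d)) = (\<Sum>a<d. \<Sum>b<d. h a b)"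
proof -
  have bij: "bij_betw (\<lambda>(a,b). a*d+b) ({..<d}\<times>{..<d}) {..<d*d}"
  proof (rule bij_betw_byWitness[where f'="\<lambda>p. (p div d, p mod d)"])
    show "\<forall>x\<in>{..<d}\<times>{..<d}. (\<lambda>p. (p div d, p mod d)) ((\<lambda>(a,b). a*d+b) x) = x" by auto
    show "\<forall>y\<in>{..<d*d}. (\<lambda>(a,b). a*d+b) (y div d, y mod d) = y" by auto
    show "(\<lambda>(a,b). a*d+b) ` ({..<d}\<times>{..<d}) \<subseteq> {..<d*d}"
      by (auto intro: lt_sq)
    show "(\<lambda>p. (p div d, p mod d)) ` {..<d*d} \<subseteq> {..<d}\<times>{..<d}"
    proof
      fix z assume "z \<in> (\<lambda>p. (p div d, p mod d)) ` {..<d*d}"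
      then obtain p where p: "p < d*d" "z = (p div d, p mod d)" by auto
      hence "d > 0" by (cases d) auto
      thus "z \<in> {..<d}\<times>{..<d}" using p by (auto simp: less_mult_imp_div_less)
    qed
  qed
  have "(\<Sum>p<d*d. h (p div d) (p mod d)) = (\<Sum>x\<in>{..<d}\<times>{..<d}. h (fst x) (snd x))"
    by (subst sum.reindex_bij_betw[OF bij, symmetric]) (auto intro!: sum.cong)
  also have "\<dots> = (\<Sum>a<d. \<Sum>b<d. h a b)" by (simp add: sum.cartesian_product case_prod_unfold)
  finally show ?thesis .
qed

lemma gm_parts:
  assumes "gm_basis d lam"
  shows "\<forall>i\<in>{1..d^2-1}. \<forall>a<d. \<forall>b<d. lam i a b = cnj (lam i b a)"
    "\<forall>i\<in>{1..d^2-1}. (\<Sum>a<d. lam i a a) = 0"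
    "\<forall>i\<in>{1..d^2-1}. \<forall>j\<in>{1..d^2-1}.
        (\<Sum>a<d. \<Sum>b<d. lam i a b * lam j b a) = (if i = j then of_nat d else 0)"
proof -
  show "\<forall>i\<in>{1..d^2-1}. \<forall>a<d. \<forall>b<d. lam i a b = cnj (lam i b a)"
    using assms unfolding gm_basis_def by (elim conjE) assumption
  show "\<forall>i\<in>{1..d^2-1}. (\<Sum>a<d. lam i a a) = 0"
    using assms unfolding gm_basis_def by (elim conjE) assumption
  show "\<forall>i\<in>{1..d^2-1}. \<forall>j\<in>{1..d^2-1}.
        (\<Sum>a<d. \<Sum>b<d. lam i a b * lam j b a) = (if i = j then of_nat d else 0)"
    using assms unfolding gm_basis_def by (elim conjE) assumption
qed

lemma gm_herm: assumes "gm_basis d lam" "1 \<le> i" "i \<le> d^2-1" "a<d" "b<d" shows "cnj (lam i a b) = lam i b a"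
proof -
  have h: "\<forall>a<d. \<forall>b<d. lam i a b = cnj (lam i b a)"
    by (rule bspec[OF gm_parts(1)[OF assms(1)]]) (use assms(2,3) in simp)
  have "lam i b a = cnj (lam i a b)" using h[rule_format, OF assms(5) assms(4)] .
  thus ?thesis by simp
qed

lemma diag_sum: "(\<Sum>a<d. \<Sum>b<(d::nat). (if a = b then f a b else (0::complex))) = (\<Sum>a<d. f a a)"
proof (rule sum.cong[OF refl])
  fix a assume "a \<in> {..<d}"
  thus "(\<Sum>b<d. (if a = b then f a b else 0)) = f a a" by (simp add: sum.delta)
qed

lemma lamE_orth:
  assumes g: "gm_basis d lam" and i: "i < d^2" and j: "j < d^2"
  shows "(\<Sum>a<d. \<Sum>b<d. lamE lam i a b * cnj (lamE lam j a b)) = (if i = j then of_nat d else 0)"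
proof -
  have tr: "\<And>k. 1 \<le> k \<Longrightarrow> k \<le> d^2-1 \<Longrightarrow> (\<Sum>a<d. lam k a a) = 0" using gm_parts(2)[OF g] by simp
  have on: "\<And>k l. k\<in>{1..d^2-1} \<Longrightarrow> l\<in>{1..d^2-1} \<Longrightarrow> (\<Sum>a<d. \<Sum>b<d. lam k a b * lam l b a) = (if k = l then of_nat d else 0)"
    using gm_parts(3)[OF g] by simp
  show ?thesis
  proof (cases "i = 0")
    case True
    show ?thesis
    proof (cases "j = 0")
      case True 
      have "(\<Sum>a<d. \<Sum>b<d. lamE lam i a b * cnj (lamE lam j a b)) = (\<Sum>a<d. \<Sum>b<d. (if a = b then 1 else 0))"
        using \<open>i=0\<close> True by (intro sum.cong refl) (simp add: lamE_def)
      also have "\<dots> = (\<Sum>a<d. 1)" by (rule diag_sum)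
      finally show ?thesis using \<open>i=0\<close> True by simp
    next
      case False
      have "(\<Sum>a<d. \<Sum>b<d. lamE lam i a b * cnj (lamE lam j a b)) = (\<Sum>a<d. \<Sum>b<d. (if a = b then cnj (lam j a b) else 0))"
        using \<open>i=0\<close> False by (intro sum.cong refl) (simp add: lamE_def)
      also have "\<dots> = (\<Sum>a<d. cnj (lam j a a))" by (rule diag_sum)
      also have "\<dots> = cnj (\<Sum>a<d. lam j a a)" by simp
      also have "\<dots> = 0" using tr[of j] False j by simp
      finally show ?thesis using False \<open>i=0\<close> by simp
    qed
  next
    case False
    show ?thesis
    proof (cases "j = 0")
      case True
      have "(\<Sum>a<d. \<Sum>b<d. lamE lam i a b * cnj (lamE lam j a b)) = (\<Sum>a<d. \<Sum>b<d. (if a = b then lam i a b else 0))"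
        using False True by (intro sum.cong refl) (simp add: lamE_def)
      also have "\<dots> = (\<Sum>a<d. lam i a a)" by (rule diag_sum)
      also have "\<dots> = 0" using tr[of i] False i by simp
      finally show ?thesis using False True by simp
    next
      case False2: False
      have "(\<Sum>a<d. \<Sum>b<d. lamE lam i a b * cnj (lamE lam j a b)) = (\<Sum>a<d. \<Sum>b<d. lam i a b * lam j b a)"
      proof (intro sum.cong refl)
        fix a b assume "a \<in> {..<d}" "b \<in> {..<d}"
        moreover have "1 \<le> j" "j \<le> d^2-1" using False2 j by auto
        ultimately show "lamE lam i a b * cnj (lamE lam j a b) = lam i a b * lam j b a"
          using False False2 by (simp add: lamE_def gm_herm[OF g])
      qed
      also have "\<dots> = (if i = j then of_nat d else 0)" using on[of i j] False False2 i j by auto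
      finally show ?thesis .
    qed
  qed
qed

lemma lamE_complete:
  assumes g: "gm_basis d lam" and ab: "a < d" "b < d" "a' < d" "b' < d"
  shows "(\<Sum>i<d^2. lamE lam i a b * cnj (lamE lam i a' b')) = (if a = a' \<and> b = b' then of_nat d else 0)"
proof -
  have d0: "d > 0" using ab by auto
  define N where "N = d*d"
  define U where "U = mat N N (\<lambda>(i,p). lamE lam i (p div d) (p mod d))"
  define W where "W = mat N N (\<lambda>(p,i). cnj (lamE lam i (p div d) (p mod d)) / of_nat d)"
  have UC: "U \<in> carrier_mat N N" and WC: "W \<in> carrier_mat N N" unfolding U_def W_def by auto
  have "U * W = 1\<^sub>m N"
  proof (rule eq_matI)
    fix i j assume i: "i < dim_row (1\<^sub>m N)" and j: "j < dim_col (1\<^sub>m N)"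
    hence i': "i < d^2" "j < d^2" by (auto simp: N_def power2_eq_square)
    have "(U * W) $$ (i,j) = (\<Sum>p<N. lamE lam i (p div d) (p mod d) * (cnj (lamE lam j (p div d) (p mod d)) / of_nat d))"
      using i j unfolding U_def W_def by (simp add: scalar_prod_def lessThan_atLeast0)
    also have "\<dots> = (\<Sum>a<d. \<Sum>b<d. lamE lam i a b * cnj (lamE lam j a b)) / of_nat d"
    proof -
      have "(\<Sum>p<N. lamE lam i (p div d) (p mod d) * (cnj (lamE lam j (p div d) (p mod d)) / of_nat d))
         = (\<Sum>a<d. \<Sum>b<d. lamE lam i a b * (cnj (lamE lam j a b) / of_nat d))"
        unfolding N_def by (rule sum_div_mod)
      also have "\<dots> = (\<Sum>a<d. \<Sum>b<d. lamE lam i a b * cnj (lamE lam j a b)) / of_nat d"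
        by (simp only: sum_divide_distrib times_divide_eq_right)
      finally show ?thesis .
    qed
    also have "\<dots> = 1\<^sub>m N $$ (i,j)" using lamE_orth[OF g i'] i j d0 by simp
    finally show "(U * W) $$ (i,j) = 1\<^sub>m N $$ (i,j)" .
  qed (auto simp: U_def W_def)
  hence WU: "W * U = 1\<^sub>m N" by (rule mat_mult_left_right_inverse[OF UC WC])
  have ent: "(W * U) $$ (p,q) = (\<Sum>i<N. cnj (lamE lam i (p div d) (p mod d)) / of_nat d * lamE lam i (q div d) (q mod d))"
    if "p < N" "q < N" for p q
    using that unfolding U_def W_def by (simp add: scalar_prod_def lessThan_atLeast0)
  have pq: "a'*d+b' < N" "a*d+b < N" unfolding N_def using ab by (auto intro: lt_sq)
  have dm: "(a'*d+b') div d = a'" "(a'*d+b') mod d = b'" "(a*d+b) div d = a" "(a*d+b) mod d = b"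
    using ab by auto
  have "(W * U) $$ (a'*d+b', a*d+b) = (\<Sum>i<N. cnj (lamE lam i a' b') / of_nat d * lamE lam i a b)"
    using ent[OF pq] unfolding dm .
  also have "\<dots> = (\<Sum>i<d^2. lamE lam i a b * cnj (lamE lam i a' b')) / of_nat d"
    unfolding N_def power2_eq_square sum_divide_distrib by (rule sum.cong) auto
  finally have e: "(W * U) $$ (a'*d+b', a*d+b) = (\<Sum>i<d^2. lamE lam i a b * cnj (lamE lam i a' b')) / of_nat d" .
  have "(W * U) $$ (a'*d+b', a*d+b) = (if a'*d+b' = a*d+b then 1 else 0)" unfolding WU using pq by simp
  also have "\<dots> = (if a = a' \<and> b = b' then 1 else 0)" using inj_dm[of b d b' a' a] ab by simp
  finally have "(\<Sum>i<d^2. lamE lam i a b * cnj (lamE lam i a' b')) / of_nat d = (if a = a' \<and> b = b' then 1 else 0)"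
    unfolding e .
  thus ?thesis using d0 by (auto simp: divide_eq_eq split: if_splits)
qed


definition cfgS :: "nat set \<Rightarrow> nat \<Rightarrow> (nat \<Rightarrow> nat) set" where
  "cfgS S D = {x. (\<forall>k\<in>S. x k < D) \<and> (\<forall>k. k \<notin> S \<longrightarrow> x k = 0)}"

definition cadd :: "(nat \<Rightarrow> nat) \<Rightarrow> (nat \<Rightarrow> nat) \<Rightarrow> (nat \<Rightarrow> nat)" where
  "cadd u v = (\<lambda>k. u k + v k)"

lemma cadd_comm: "cadd u v = cadd v u" by (auto simp: cadd_def)
lemma cadd_zero[simp]: "cadd u (\<lambda>_. 0) = u" "cadd (\<lambda>_. 0) u = u" by (auto simp: cadd_def)

lemma cfg_eq: "cfg n d = cfgS {..<n} d" by (auto simp: cfg_def cfgS_def not_less)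

lemma finite_cfgS: "finite S \<Longrightarrow> finite (cfgS S D)"
proof -
  assume "finite S"
  have "cfgS S D = {f. \<forall>x. (x \<in> S \<longrightarrow> f x \<in> {..<D}) \<and> (x \<notin> S \<longrightarrow> f x = 0)}" by (auto simp: cfgS_def)
  thus ?thesis using finite_set_of_finite_funs[OF \<open>finite S\<close>, of "{..<D}" 0] by simp
qed

lemma zero_cfgS: "D > 0 \<Longrightarrow> (\<lambda>_. 0) \<in> cfgS S D" by (simp add: cfgS_def)

lemma cfgS_empty: "cfgS {} D = {\<lambda>_. 0}" by (auto simp: cfgS_def)

lemma sum_cfgS_split:
  assumes "S \<inter> T = {}"
  shows "(\<Sum>x\<in>cfgS (S \<union> T) D. F x) = (\<Sum>u\<in>cfgS S D. \<Sum>v\<in>cfgS T D. F (cadd u v))"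
proof -
  have "(\<Sum>u\<in>cfgS S D. \<Sum>v\<in>cfgS T D. F (cadd u v)) = (\<Sum>p\<in>cfgS S D \<times> cfgS T D. F (cadd (fst p) (snd p)))"
    by (simp add: sum.cartesian_product case_prod_unfold)
  also have "\<dots> = (\<Sum>x\<in>cfgS (S \<union> T) D. F x)"
  proof (rule sum.reindex_bij_witness[where i="\<lambda>x. (restr S x, restr T x)" and j="\<lambda>p. cadd (fst p) (snd p)"])
    fix p assume p: "p \<in> cfgS S D \<times> cfgS T D"
    show "(restr S (cadd (fst p) (snd p)), restr T (cadd (fst p) (snd p))) = p"
      using p assms(1) by (cases p) (auto simp: restr_def cadd_def cfgS_def fun_eq_iff disjoint_iff)
    show "cadd (fst p) (snd p) \<in> cfgS (S \<union> T) D" using p assms(1) by (auto simp: cadd_def cfgS_def disjoint_iff)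
    show "F (cadd (fst p) (snd p)) = F (cadd (fst p) (snd p))" ..
  next
    fix x assume x: "x \<in> cfgS (S \<union> T) D"
    show "cadd (fst (restr S x, restr T x)) (snd (restr S x, restr T x)) = x"
      using x assms(1) by (auto simp: restr_def cadd_def cfgS_def fun_eq_iff disjoint_iff)
    show "(restr S x, restr T x) \<in> cfgS S D \<times> cfgS T D" using x by (auto simp: restr_def cfgS_def)
  qed
  finally show ?thesis ..
qed

definition ebas :: "nat \<Rightarrow> nat \<Rightarrow> (nat \<Rightarrow> nat)" where
  "ebas s t = (\<lambda>k. if k = s then t else 0)"

lemma sum_cfgS_single: "(\<Sum>x\<in>cfgS {s} D. F x) = (\<Sum>t<D. F (ebas s t))"
proof (rule sum.reindex_bij_witness[where i="\<lambda>t. ebas s t" and j="\<lambda>x. x s"])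
  fix x assume x: "x \<in> cfgS {s} D"
  show "ebas s (x s) = x" using x by (auto simp: ebas_def cfgS_def fun_eq_iff)
  show "x s \<in> {..<D}" using x by (auto simp: cfgS_def)
  show "F (ebas s (x s)) = F x" using x by (simp add: \<open>ebas s (x s) = x\<close>)
next
  fix t assume "t \<in> {..<D}"
  thus "ebas s t s = t" "ebas s t \<in> cfgS {s} D" by (auto simp: ebas_def cfgS_def)
qed

lemma sum_prod_cfgS:
  fixes f :: "nat \<Rightarrow> nat \<Rightarrow> 'a::comm_semiring_1"
  assumes "finite S"
  shows "(\<Sum>i\<in>cfgS S D. \<Prod>k\<in>S. f k (i k)) = (\<Prod>k\<in>S. \<Sum>t<D. f k t)"
  using assms
proof (induction S rule: finite_induct)
  case empty
  show ?case by (simp add: cfgS_empty)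
next
  case (insert s S)
  have "(\<Sum>i\<in>cfgS (insert s S) D. \<Prod>k\<in>insert s S. f k (i k))
      = (\<Sum>u\<in>cfgS {s} D. \<Sum>v\<in>cfgS S D. \<Prod>k\<in>insert s S. f k (cadd u v k))"
    using sum_cfgS_split[where S="{s}" and T=S and D=D and F="\<lambda>i. \<Prod>k\<in>insert s S. f k (i k)"] insert(2) by simp
  also have "\<dots> = (\<Sum>t<D. \<Sum>v\<in>cfgS S D. f s t * (\<Prod>k\<in>S. f k (v k)))"
  proof (subst sum_cfgS_single, intro sum.cong refl)
    fix t v assume v: "v \<in> cfgS S D"
    have "(\<Prod>k\<in>insert s S. f k (cadd (ebas s t) v k)) = f s (cadd (ebas s t) v s) * (\<Prod>k\<in>S. f k (cadd (ebas s t) v k))"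
      using insert(1,2) by simp
    also have "cadd (ebas s t) v s = t" using v insert(2) by (auto simp: cadd_def ebas_def cfgS_def)
    also have "(\<Prod>k\<in>S. f k (cadd (ebas s t) v k)) = (\<Prod>k\<in>S. f k (v k))"
      using insert(2) by (intro prod.cong refl) (auto simp: cadd_def ebas_def)
    finally show "(\<Prod>k\<in>insert s S. f k (cadd (ebas s t) v k)) = f s t * (\<Prod>k\<in>S. f k (v k))" .
  qed
  also have "\<dots> = (\<Sum>t<D. f s t) * (\<Sum>v\<in>cfgS S D. \<Prod>k\<in>S. f k (v k))"
    by (rule sum_product[symmetric])
  also have "\<dots> = (\<Prod>k\<in>insert s S. \<Sum>t<D. f k t)" using insert by simp
  finally show ?case .
qed


definition LamS :: "(nat \<Rightarrow> nat \<Rightarrow> nat \<Rightarrow> complex) \<Rightarrow> nat set \<Rightarrow> (nat \<Rightarrow> nat) \<Rightarrow> (nat \<Rightarrow> nat) \<Rightarrow> (nat \<Rightarrow> nat) \<Rightarrow> complex" where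
  "LamS lam \<delta> i y x = (\<Prod>k\<in>\<delta>. lamE lam (i k) (y k) (x k))"

lemma prod_if_const:
  "finite S \<Longrightarrow> (\<Prod>k\<in>S. (if P k then c else (0::complex))) = (if (\<forall>k\<in>S. P k) then c ^ card S else 0)"
proof (induction S rule: finite_induct)
  case empty thus ?case by simp
next
  case (insert s S) thus ?case by auto
qed

lemma cfgS_eq_iff: "x \<in> cfgS S D \<Longrightarrow> x' \<in> cfgS S D \<Longrightarrow> (x = x') = (\<forall>k\<in>S. x k = x' k)"
  by (auto simp: cfgS_def fun_eq_iff)

lemma lam_sum:
  assumes g: "gm_basis d lam" and fin: "finite \<delta>"
    and xy: "x \<in> cfgS \<delta> d" "y \<in> cfgS \<delta> d" "x' \<in> cfgS \<delta> d" "y' \<in> cfgS \<delta> d"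
  shows "(\<Sum>i\<in>cfgS \<delta> (d^2). LamS lam \<delta> i y x * cnj (LamS lam \<delta> i y' x'))
     = (if x = x' \<and> y = y' then (of_nat d) ^ card \<delta> else 0)"
proof -
  have "(\<Sum>i\<in>cfgS \<delta> (d^2). LamS lam \<delta> i y x * cnj (LamS lam \<delta> i y' x'))
     = (\<Sum>i\<in>cfgS \<delta> (d^2). \<Prod>k\<in>\<delta>. (\<lambda>k t. lamE lam t (y k) (x k) * cnj (lamE lam t (y' k) (x' k))) k (i k))"
    unfolding LamS_def by (simp add: prod.distrib)
  also have "\<dots> = (\<Prod>k\<in>\<delta>. \<Sum>t<d^2. lamE lam t (y k) (x k) * cnj (lamE lam t (y' k) (x' k)))"
    by (rule sum_prod_cfgS[OF fin])
  also have "\<dots> = (\<Prod>k\<in>\<delta>. (if y k = y' k \<and> x k = x' k then of_nat d else 0))"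
  proof (rule prod.cong[OF refl])
    fix k assume "k \<in> \<delta>"
    hence "y k < d" "x k < d" "y' k < d" "x' k < d" using xy by (auto simp: cfgS_def)
    thus "(\<Sum>t<d^2. lamE lam t (y k) (x k) * cnj (lamE lam t (y' k) (x' k))) = (if y k = y' k \<and> x k = x' k then of_nat d else 0)"
      by (rule lamE_complete[OF g])
  qed
  also have "\<dots> = (if (\<forall>k\<in>\<delta>. y k = y' k \<and> x k = x' k) then (of_nat d) ^ card \<delta> else 0)"
    by (rule prod_if_const[OF fin])
  also have "(\<forall>k\<in>\<delta>. y k = y' k \<and> x k = x' k) = (x = x' \<and> y = y')"
    using cfgS_eq_iff[OF xy(1,3)] cfgS_eq_iff[OF xy(2,4)] by blast
  finally show ?thesis .
qed

lemma swap3: "(\<Sum>i\<in>I. \<Sum>a\<in>A. \<Sum>b\<in>B. g i a b) = (\<Sum>a\<in>A. \<Sum>b\<in>B. \<Sum>i\<in>I. (g i a b :: complex))"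
proof -
  have "(\<Sum>i\<in>I. \<Sum>a\<in>A. \<Sum>b\<in>B. g i a b) = (\<Sum>a\<in>A. \<Sum>i\<in>I. \<Sum>b\<in>B. g i a b)" by (rule sum.swap)
  also have "\<dots> = (\<Sum>a\<in>A. \<Sum>b\<in>B. \<Sum>i\<in>I. g i a b)" by (intro sum.cong refl) (rule sum.swap)
  finally show ?thesis .
qed

lemma parseval_aux:
  assumes g: "gm_basis d lam" and fin: "finite \<delta>" and xy: "x \<in> cfgS \<delta> d" "y \<in> cfgS \<delta> d"
  shows "(\<Sum>i\<in>cfgS \<delta> (d^2). LamS lam \<delta> i y x * cnj (\<Sum>x'\<in>cfgS \<delta> d. \<Sum>y'\<in>cfgS \<delta> d. K x' y' * LamS lam \<delta> i y' x'))
    = (of_nat d) ^ card \<delta> * cnj (K x y)"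
proof -
  let ?X = "cfgS \<delta> d"
  have "(\<Sum>i\<in>cfgS \<delta> (d^2). LamS lam \<delta> i y x * cnj (\<Sum>x'\<in>?X. \<Sum>y'\<in>?X. K x' y' * LamS lam \<delta> i y' x'))
      = (\<Sum>i\<in>cfgS \<delta> (d^2). \<Sum>x'\<in>?X. \<Sum>y'\<in>?X. cnj (K x' y') * (LamS lam \<delta> i y x * cnj (LamS lam \<delta> i y' x')))"
    by (simp add: sum_distrib_left algebra_simps)
  also have "\<dots> = (\<Sum>x'\<in>?X. \<Sum>y'\<in>?X. \<Sum>i\<in>cfgS \<delta> (d^2). cnj (K x' y') * (LamS lam \<delta> i y x * cnj (LamS lam \<delta> i y' x')))"
    by (rule swap3)
  also have "\<dots> = (\<Sum>x'\<in>?X. \<Sum>y'\<in>?X. cnj (K x' y') * (if x = x' \<and> y = y' then (of_nat d) ^ card \<delta> else 0))"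
    by (intro sum.cong refl, simp only: sum_distrib_left[symmetric], subst lam_sum[OF g fin xy], auto)
  also have "\<dots> = (\<Sum>x'\<in>?X. if x = x' then cnj (K x' y) * (of_nat d) ^ card \<delta> else 0)"
    by (intro sum.cong refl) (use xy finite_cfgS[OF fin] in \<open>auto simp: if_distrib sum.delta sum.delta' cong: if_cong\<close>)
  also have "\<dots> = (of_nat d) ^ card \<delta> * cnj (K x y)" using xy finite_cfgS[OF fin] by (simp add: sum.delta)
  finally show ?thesis .
qed

lemma parseval:
  assumes g: "gm_basis d lam" and fin: "finite \<delta>"
  shows "(\<Sum>i\<in>cfgS \<delta> (d^2). (\<Sum>x\<in>cfgS \<delta> d. \<Sum>y\<in>cfgS \<delta> d. M x y * LamS lam \<delta> i y x)
             * cnj (\<Sum>x\<in>cfgS \<delta> d. \<Sum>y\<in>cfgS \<delta> d. K x y * LamS lam \<delta> i y x))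
    = (of_nat d) ^ card \<delta> * (\<Sum>x\<in>cfgS \<delta> d. \<Sum>y\<in>cfgS \<delta> d. M x y * cnj (K x y))"
proof -
  let ?X = "cfgS \<delta> d"
  let ?C = "\<lambda>i. cnj (\<Sum>x\<in>?X. \<Sum>y\<in>?X. K x y * LamS lam \<delta> i y x)"
  have "(\<Sum>i\<in>cfgS \<delta> (d^2). (\<Sum>x\<in>?X. \<Sum>y\<in>?X. M x y * LamS lam \<delta> i y x) * ?C i)
      = (\<Sum>i\<in>cfgS \<delta> (d^2). \<Sum>x\<in>?X. \<Sum>y\<in>?X. M x y * (LamS lam \<delta> i y x * ?C i))"
    by (simp add: sum_distrib_right mult.assoc)
  also have "\<dots> = (\<Sum>x\<in>?X. \<Sum>y\<in>?X. \<Sum>i\<in>cfgS \<delta> (d^2). M x y * (LamS lam \<delta> i y x * ?C i))"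
    by (rule swap3)
  also have "\<dots> = (\<Sum>x\<in>?X. \<Sum>y\<in>?X. M x y * ((of_nat d) ^ card \<delta> * cnj (K x y)))"
  proof (intro sum.cong refl)
    fix x y assume "x \<in> ?X" "y \<in> ?X"
    show "(\<Sum>i\<in>cfgS \<delta> (d^2). M x y * (LamS lam \<delta> i y x * ?C i)) = M x y * ((of_nat d) ^ card \<delta> * cnj (K x y))"
      by (simp only: sum_distrib_left[symmetric], subst parseval_aux[OF g fin \<open>x \<in> ?X\<close> \<open>y \<in> ?X\<close>], rule refl)
  qed
  also have "\<dots> = (of_nat d) ^ card \<delta> * (\<Sum>x\<in>?X. \<Sum>y\<in>?X. M x y * cnj (K x y))"
    by (simp add: sum_distrib_left algebra_simps)
  finally show ?thesis .
qed


definition cc :: "(nat \<Rightarrow> nat \<Rightarrow> nat \<Rightarrow> complex) \<Rightarrow> nat \<Rightarrow> nat \<Rightarrow> ((nat \<Rightarrow> nat) \<Rightarrow> complex) \<Rightarrow> (nat \<Rightarrow> nat) \<Rightarrow> complex" where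
  "cc lam n d \<psi> i = (\<Sum>x\<in>cfgS {..<n} d. \<Sum>y\<in>cfgS {..<n} d. (\<psi> x * cnj (\<psi> y)) * LamS lam {..<n} i y x)"

definition Mred :: "nat \<Rightarrow> nat \<Rightarrow> ((nat \<Rightarrow> nat) \<Rightarrow> complex) \<Rightarrow> nat set \<Rightarrow> (nat \<Rightarrow> nat) \<Rightarrow> (nat \<Rightarrow> nat) \<Rightarrow> complex" where
  "Mred n d \<psi> \<delta> x1 y1 = (\<Sum>a\<in>cfgS ({..<n} - \<delta>) d. \<psi> (cadd x1 a) * cnj (\<psi> (cadd y1 a)))"

lemma swap4: "(\<Sum>x\<in>X. \<Sum>y\<in>Y. \<Sum>a\<in>A. \<Sum>b\<in>B. g x y a b) = (\<Sum>a\<in>A. \<Sum>b\<in>B. \<Sum>x\<in>X. \<Sum>y\<in>Y. (g x y a b :: complex))"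
proof -
  have "(\<Sum>x\<in>X. \<Sum>y\<in>Y. \<Sum>a\<in>A. \<Sum>b\<in>B. g x y a b) = (\<Sum>x\<in>X. \<Sum>a\<in>A. \<Sum>b\<in>B. \<Sum>y\<in>Y. g x y a b)"
    by (intro sum.cong refl) (rule swap3)
  also have "\<dots> = (\<Sum>a\<in>A. \<Sum>b\<in>B. \<Sum>x\<in>X. \<Sum>y\<in>Y. g x y a b)" by (rule swap3)
  finally show ?thesis .
qed

lemma sum_split2:
  assumes "S \<inter> T = {}"
  shows "(\<Sum>x\<in>cfgS (S \<union> T) D. \<Sum>y\<in>cfgS (S \<union> T) D. F x y)
       = (\<Sum>x1\<in>cfgS S D. \<Sum>x2\<in>cfgS T D. \<Sum>y1\<in>cfgS S D. \<Sum>y2\<in>cfgS T D. F (cadd x1 x2) (cadd y1 y2))"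
proof -
  have "(\<Sum>x\<in>cfgS (S \<union> T) D. \<Sum>y\<in>cfgS (S \<union> T) D. F x y)
      = (\<Sum>x\<in>cfgS (S \<union> T) D. \<Sum>y1\<in>cfgS S D. \<Sum>y2\<in>cfgS T D. F x (cadd y1 y2))"
    by (rule sum.cong[OF refl], rule sum_cfgS_split[OF assms])
  also have "\<dots> = (\<Sum>x1\<in>cfgS S D. \<Sum>x2\<in>cfgS T D. \<Sum>y1\<in>cfgS S D. \<Sum>y2\<in>cfgS T D. F (cadd x1 x2) (cadd y1 y2))"
    by (rule sum_cfgS_split[OF assms])
  finally show ?thesis .
qed

lemma cadd_on_left: "x1 \<in> cfgS S D \<Longrightarrow> a \<in> cfgS T D' \<Longrightarrow> S \<inter> T = {} \<Longrightarrow> k \<in> S \<Longrightarrow> cadd x1 a k = x1 k"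
  by (auto simp: cadd_def cfgS_def)
lemma cadd_on_right: "x1 \<in> cfgS S D \<Longrightarrow> a \<in> cfgS T D' \<Longrightarrow> S \<inter> T = {} \<Longrightarrow> k \<in> T \<Longrightarrow> cadd x1 a k = a k"
  by (auto simp: cadd_def cfgS_def)

lemma LamS_split:
  assumes fin: "finite S" "finite T" and disj: "S \<inter> T = {}"
    and xy: "x1 \<in> cfgS S d" "y1 \<in> cfgS S d" "x2 \<in> cfgS T d" "y2 \<in> cfgS T d"
    and u: "u \<in> cfgS S D" and v: "v \<in> cfgS T D'"
  shows "LamS lam (S \<union> T) (cadd u v) (cadd y1 y2) (cadd x1 x2) = LamS lam S u y1 x1 * LamS lam T v y2 x2"
proof -
  have "LamS lam (S \<union> T) (cadd u v) (cadd y1 y2) (cadd x1 x2)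
     = (\<Prod>k\<in>S. lamE lam (cadd u v k) (cadd y1 y2 k) (cadd x1 x2 k)) * (\<Prod>k\<in>T. lamE lam (cadd u v k) (cadd y1 y2 k) (cadd x1 x2 k))"
    unfolding LamS_def by (rule prod.union_disjoint[OF fin disj])
  also have "(\<Prod>k\<in>S. lamE lam (cadd u v k) (cadd y1 y2 k) (cadd x1 x2 k)) = LamS lam S u y1 x1"
    unfolding LamS_def using xy u v disj by (intro prod.cong refl) (simp add: cadd_on_left)
  also have "(\<Prod>k\<in>T. lamE lam (cadd u v k) (cadd y1 y2 k) (cadd x1 x2 k)) = LamS lam T v y2 x2"
    unfolding LamS_def using xy u v disj by (intro prod.cong refl) (simp add: cadd_on_right)
  finally show ?thesis .
qed

lemma LamS_zero:
  assumes fin: "finite T" and a: "a \<in> cfgS T d" "a' \<in> cfgS T d"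
  shows "LamS lam T (\<lambda>_. 0) a' a = (if a' = a then 1 else 0)"
proof -
  have "LamS lam T (\<lambda>_. 0) a' a = (\<Prod>k\<in>T. if a' k = a k then 1 else 0)"
    unfolding LamS_def lamE_def by simp
  also have "\<dots> = (if (\<forall>k\<in>T. a' k = a k) then 1 ^ card T else 0)" by (rule prod_if_const[OF fin])
  also have "(\<forall>k\<in>T. a' k = a k) = (a' = a)" using cfgS_eq_iff[OF a(2,1)] by simp
  finally show ?thesis by simp
qed

lemma cc_red:
  assumes \<delta>: "\<delta> \<subseteq> {..<n}" and i: "i \<in> cfgS \<delta> D"
  shows "cc lam n d \<psi> i = (\<Sum>x1\<in>cfgS \<delta> d. \<Sum>y1\<in>cfgS \<delta> d. Mred n d \<psi> \<delta> x1 y1 * LamS lam \<delta> i y1 x1)"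
proof -
  define R where "R = {..<n} - \<delta>"
  have N: "{..<n} = \<delta> \<union> R" and disj: "\<delta> \<inter> R = {}" using \<delta> unfolding R_def by auto
  have fin: "finite \<delta>" "finite R" using \<delta> unfolding R_def by (auto intro: finite_subset)
  have i': "i = cadd i (\<lambda>_. 0)" by simp
  have z: "(\<lambda>_. 0) \<in> cfgS R 1" by (simp add: cfgS_def)
  have "cc lam n d \<psi> i = (\<Sum>x1\<in>cfgS \<delta> d. \<Sum>a\<in>cfgS R d. \<Sum>y1\<in>cfgS \<delta> d. \<Sum>a'\<in>cfgS R d.
      (\<psi> (cadd x1 a) * cnj (\<psi> (cadd y1 a'))) * LamS lam (\<delta> \<union> R) i (cadd y1 a') (cadd x1 a))"
    unfolding cc_def N by (rule sum_split2[OF disj])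
  also have "\<dots> = (\<Sum>x1\<in>cfgS \<delta> d. \<Sum>a\<in>cfgS R d. \<Sum>y1\<in>cfgS \<delta> d. \<Sum>a'\<in>cfgS R d.
      (if a' = a then (\<psi> (cadd x1 a) * cnj (\<psi> (cadd y1 a'))) * LamS lam \<delta> i y1 x1 else 0))"
  proof (intro sum.cong refl)
    fix x1 a y1 a' assume h: "x1 \<in> cfgS \<delta> d" "a \<in> cfgS R d" "y1 \<in> cfgS \<delta> d" "a' \<in> cfgS R d"
    have "LamS lam (\<delta> \<union> R) i (cadd y1 a') (cadd x1 a) = LamS lam \<delta> i y1 x1 * LamS lam R (\<lambda>_. 0) a' a"
      using LamS_split[OF fin disj h(1) h(3) h(2) h(4) i z, of lam] by simp
    also have "\<dots> = (if a' = a then LamS lam \<delta> i y1 x1 else 0)" using LamS_zero[OF fin(2) h(2) h(4)] by simp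
    finally show "(\<psi> (cadd x1 a) * cnj (\<psi> (cadd y1 a'))) * LamS lam (\<delta> \<union> R) i (cadd y1 a') (cadd x1 a) =
      (if a' = a then (\<psi> (cadd x1 a) * cnj (\<psi> (cadd y1 a'))) * LamS lam \<delta> i y1 x1 else 0)" by simp
  qed
  also have "\<dots> = (\<Sum>x1\<in>cfgS \<delta> d. \<Sum>a\<in>cfgS R d. \<Sum>y1\<in>cfgS \<delta> d. (\<psi> (cadd x1 a) * cnj (\<psi> (cadd y1 a))) * LamS lam \<delta> i y1 x1)"
    using finite_cfgS[OF fin(2)] by (intro sum.cong refl) (simp add: sum.delta)
  also have "\<dots> = (\<Sum>x1\<in>cfgS \<delta> d. \<Sum>y1\<in>cfgS \<delta> d. \<Sum>a\<in>cfgS R d. (\<psi> (cadd x1 a) * cnj (\<psi> (cadd y1 a))) * LamS lam \<delta> i y1 x1)"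
    by (rule sum.cong[OF refl], rule sum.swap)
  also have "\<dots> = (\<Sum>x1\<in>cfgS \<delta> d. \<Sum>y1\<in>cfgS \<delta> d. Mred n d \<psi> \<delta> x1 y1 * LamS lam \<delta> i y1 x1)"
    unfolding Mred_def R_def by (simp add: sum_distrib_right)
  finally show ?thesis .
qed

lemma parseval_cc:
  assumes g: "gm_basis d lam" and \<delta>: "\<delta> \<subseteq> {..<n}"
  shows "(\<Sum>i\<in>cfgS \<delta> (d^2). (cmod (cc lam n d \<psi> i))^2) = real d ^ card \<delta> * (\<Sum>x1\<in>cfgS \<delta> d. \<Sum>y1\<in>cfgS \<delta> d. (cmod (Mred n d \<psi> \<delta> x1 y1))^2)"
proof -
  have fin: "finite \<delta>" using \<delta> by (auto intro: finite_subset)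
  have "complex_of_real (\<Sum>i\<in>cfgS \<delta> (d^2). (cmod (cc lam n d \<psi> i))^2) = (\<Sum>i\<in>cfgS \<delta> (d^2). cc lam n d \<psi> i * cnj (cc lam n d \<psi> i))"
    by (simp only: of_real_sum complex_norm_square)
  also have "\<dots> = (\<Sum>i\<in>cfgS \<delta> (d^2). (\<Sum>x1\<in>cfgS \<delta> d. \<Sum>y1\<in>cfgS \<delta> d. Mred n d \<psi> \<delta> x1 y1 * LamS lam \<delta> i y1 x1)
       * cnj (\<Sum>x1\<in>cfgS \<delta> d. \<Sum>y1\<in>cfgS \<delta> d. Mred n d \<psi> \<delta> x1 y1 * LamS lam \<delta> i y1 x1))"
    by (intro sum.cong refl) (simp add: cc_red[OF \<delta>])
  also have "\<dots> = (of_nat d) ^ card \<delta> * (\<Sum>x1\<in>cfgS \<delta> d. \<Sum>y1\<in>cfgS \<delta> d. Mred n d \<psi> \<delta> x1 y1 * cnj (Mred n d \<psi> \<delta> x1 y1))"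
    by (rule parseval[OF g fin])
  also have "\<dots> = (of_nat d) ^ card \<delta> * complex_of_real (\<Sum>x1\<in>cfgS \<delta> d. \<Sum>y1\<in>cfgS \<delta> d. (cmod (Mred n d \<psi> \<delta> x1 y1))^2)"
    by (simp only: of_real_sum complex_norm_square)
  also have "\<dots> = complex_of_real (real d ^ card \<delta> * (\<Sum>x1\<in>cfgS \<delta> d. \<Sum>y1\<in>cfgS \<delta> d. (cmod (Mred n d \<psi> \<delta> x1 y1))^2))"
    by simp
  finally show ?thesis by (simp only: of_real_eq_iff)
qed


lemma csc:
  fixes p q :: "'a \<Rightarrow> complex"
  shows "(cmod (\<Sum>a\<in>A. p a * cnj (q a)))^2 \<le> (\<Sum>a\<in>A. (cmod (p a))^2) * (\<Sum>a\<in>A. (cmod (q a))^2)"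
proof -
  have "cmod (\<Sum>a\<in>A. p a * cnj (q a)) \<le> (\<Sum>a\<in>A. cmod (p a * cnj (q a)))" by (rule norm_sum)
  also have "\<dots> = (\<Sum>a\<in>A. cmod (p a) * cmod (q a))" by (simp add: norm_mult)
  finally have h: "cmod (\<Sum>a\<in>A. p a * cnj (q a)) \<le> (\<Sum>a\<in>A. cmod (p a) * cmod (q a))" .
  have "(cmod (\<Sum>a\<in>A. p a * cnj (q a)))^2 \<le> (\<Sum>a\<in>A. cmod (p a) * cmod (q a))^2"
    by (rule power_mono[OF h norm_ge_zero])
  also have "\<dots> \<le> (\<Sum>a\<in>A. (cmod (p a))^2) * (\<Sum>a\<in>A. (cmod (q a))^2)" by (rule Cauchy_Schwarz_ineq_sum)
  finally show ?thesis .
qed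

lemma sum_norm_split:
  assumes \<delta>: "\<delta> \<subseteq> {..<n}"
  shows "(\<Sum>x1\<in>cfgS \<delta> d. \<Sum>a\<in>cfgS ({..<n} - \<delta>) d. F (cadd x1 a)) = (\<Sum>x\<in>cfgS {..<n} d. F x)"
proof -
  have N: "{..<n} = \<delta> \<union> ({..<n} - \<delta>)" and disj: "\<delta> \<inter> ({..<n} - \<delta>) = {}" using \<delta> by auto
  show ?thesis by (subst N, subst sum_cfgS_split[OF disj]) (rule refl)
qed

lemma Mred_bound:
  assumes \<delta>: "\<delta> \<subseteq> {..<n}"
  shows "(\<Sum>x1\<in>cfgS \<delta> d. \<Sum>y1\<in>cfgS \<delta> d. (cmod (Mred n d \<psi> \<delta> x1 y1))^2) \<le> (\<Sum>x\<in>cfgS {..<n} d. (cmod (\<psi> x))^2)^2"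
proof -
  let ?R = "cfgS ({..<n} - \<delta>) d"
  define P where "P x1 = (\<Sum>a\<in>?R. (cmod (\<psi> (cadd x1 a)))^2)" for x1
  have "(\<Sum>x1\<in>cfgS \<delta> d. \<Sum>y1\<in>cfgS \<delta> d. (cmod (Mred n d \<psi> \<delta> x1 y1))^2) \<le> (\<Sum>x1\<in>cfgS \<delta> d. \<Sum>y1\<in>cfgS \<delta> d. P x1 * P y1)"
    unfolding Mred_def P_def by (intro sum_mono csc)
  also have "\<dots> = (\<Sum>x1\<in>cfgS \<delta> d. P x1)^2" by (simp add: power2_eq_square sum_product)
  also have "(\<Sum>x1\<in>cfgS \<delta> d. P x1) = (\<Sum>x\<in>cfgS {..<n} d. (cmod (\<psi> x))^2)"
    unfolding P_def by (rule sum_norm_split[OF \<delta>])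
  finally show ?thesis .
qed

lemma Mred_full:
  "(\<Sum>x1\<in>cfgS {..<n} d. \<Sum>y1\<in>cfgS {..<n} d. (cmod (Mred n d \<psi> {..<n} x1 y1))^2) = (\<Sum>x\<in>cfgS {..<n} d. (cmod (\<psi> x))^2)^2"
proof -
  have M: "Mred n d \<psi> {..<n} x1 y1 = \<psi> x1 * cnj (\<psi> y1)" for x1 y1
    unfolding Mred_def by (simp add: cfgS_empty)
  show ?thesis unfolding M by (simp add: norm_mult power2_eq_square sum_product power_mult_distrib mult_ac)
qed

lemma swap_norm:
  fixes \<Phi> :: "'a \<Rightarrow> 'b \<Rightarrow> complex"
  shows "(\<Sum>x\<in>X. \<Sum>y\<in>X. (cmod (\<Sum>a\<in>A. \<Phi> x a * cnj (\<Phi> y a)))^2)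
       = (\<Sum>a\<in>A. \<Sum>b\<in>A. (cmod (\<Sum>x\<in>X. \<Phi> x a * cnj (\<Phi> x b)))^2)"
proof -
  have "complex_of_real (\<Sum>x\<in>X. \<Sum>y\<in>X. (cmod (\<Sum>a\<in>A. \<Phi> x a * cnj (\<Phi> y a)))^2)
      = (\<Sum>x\<in>X. \<Sum>y\<in>X. (\<Sum>a\<in>A. \<Phi> x a * cnj (\<Phi> y a)) * cnj (\<Sum>b\<in>A. \<Phi> x b * cnj (\<Phi> y b)))"
    by (simp only: of_real_sum complex_norm_square)
  also have "\<dots> = (\<Sum>x\<in>X. \<Sum>y\<in>X. \<Sum>b\<in>A. \<Sum>a\<in>A. \<Phi> x a * cnj (\<Phi> y a) * (cnj (\<Phi> x b) * \<Phi> y b))"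
    by (simp add: sum_distrib_left sum_distrib_right)
  also have "\<dots> = (\<Sum>b\<in>A. \<Sum>a\<in>A. \<Sum>x\<in>X. \<Sum>y\<in>X. \<Phi> x a * cnj (\<Phi> y a) * (cnj (\<Phi> x b) * \<Phi> y b))"
    by (rule swap4)
  also have "\<dots> = (\<Sum>a\<in>A. \<Sum>b\<in>A. \<Sum>x\<in>X. \<Sum>y\<in>X. \<Phi> x a * cnj (\<Phi> y a) * (cnj (\<Phi> x b) * \<Phi> y b))"
    by (rule sum.swap)
  also have "\<dots> = (\<Sum>a\<in>A. \<Sum>b\<in>A. (\<Sum>x\<in>X. \<Phi> x a * cnj (\<Phi> x b)) * cnj (\<Sum>y\<in>X. \<Phi> y a * cnj (\<Phi> y b)))"
  proof (rule sum.cong[OF refl], rule sum.cong[OF refl])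
    fix a b
    have e: "(\<Sum>x\<in>X. \<Phi> x a * cnj (\<Phi> x b)) * cnj (\<Sum>y\<in>X. \<Phi> y a * cnj (\<Phi> y b))
       = (\<Sum>y\<in>X. \<Sum>x\<in>X. \<Phi> x a * cnj (\<Phi> y a) * (cnj (\<Phi> x b) * \<Phi> y b))"
      by (simp add: sum_distrib_left sum_distrib_right mult_ac)
    show "(\<Sum>x\<in>X. \<Sum>y\<in>X. \<Phi> x a * cnj (\<Phi> y a) * (cnj (\<Phi> x b) * \<Phi> y b)) =
      (\<Sum>x\<in>X. \<Phi> x a * cnj (\<Phi> x b)) * cnj (\<Sum>y\<in>X. \<Phi> y a * cnj (\<Phi> y b))"
      unfolding e by (rule sum.swap)
  qed
  also have "\<dots> = complex_of_real (\<Sum>a\<in>A. \<Sum>b\<in>A. (cmod (\<Sum>x\<in>X. \<Phi> x a * cnj (\<Phi> x b)))^2)"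
    by (simp only: of_real_sum complex_norm_square)
  finally show ?thesis by (simp only: of_real_eq_iff)
qed

lemma Mred_swap:
  assumes \<delta>: "\<delta> \<subseteq> {..<n}"
  shows "(\<Sum>x1\<in>cfgS \<delta> d. \<Sum>y1\<in>cfgS \<delta> d. (cmod (Mred n d \<psi> \<delta> x1 y1))^2)
       = (\<Sum>a\<in>cfgS ({..<n} - \<delta>) d. \<Sum>b\<in>cfgS ({..<n} - \<delta>) d. (cmod (Mred n d \<psi> ({..<n} - \<delta>) a b))^2)"
proof -
  have e: "{..<n} - ({..<n} - \<delta>) = \<delta>" using \<delta> by auto
  show ?thesis unfolding Mred_def e
    by (subst swap_norm) (simp add: cadd_comm)
qed

lemma cc_zero:
  "cc lam n d \<psi> (\<lambda>_. 0) = (\<Sum>x\<in>cfgS {..<n} d. \<psi> x * cnj (\<psi> x))"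
proof -
  have "cc lam n d \<psi> (\<lambda>_. 0) = (\<Sum>x1\<in>cfgS {} d. \<Sum>y1\<in>cfgS {} d. Mred n d \<psi> {} x1 y1 * LamS lam {} (\<lambda>_. 0) y1 x1)"
    by (rule cc_red) (auto simp: cfgS_def)
  also have "\<dots> = (\<Sum>x\<in>cfgS {..<n} d. \<psi> x * cnj (\<psi> x))"
    by (simp add: cfgS_empty Mred_def LamS_def)
  finally show ?thesis .
qed

lemma cc_zero_norm:
  assumes "(\<Sum>x\<in>cfgS {..<n} d. (cmod (\<psi> x))^2) = 1"
  shows "cc lam n d \<psi> (\<lambda>_. 0) = 1"
proof -
  have "cc lam n d \<psi> (\<lambda>_. 0) = complex_of_real (\<Sum>x\<in>cfgS {..<n} d. (cmod (\<psi> x))^2)"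
    unfolding cc_zero by (simp only: of_real_sum complex_norm_square)
  thus ?thesis using assms by simp
qed

lemma cc_upper:
  assumes g: "gm_basis d lam" and \<delta>: "\<delta> \<subseteq> {..<n}" and nrm: "(\<Sum>x\<in>cfgS {..<n} d. (cmod (\<psi> x))^2) = 1"
  shows "(\<Sum>i\<in>cfgS \<delta> (d^2). (cmod (cc lam n d \<psi> i))^2) \<le> real d ^ card \<delta>"
proof -
  have "(\<Sum>i\<in>cfgS \<delta> (d^2). (cmod (cc lam n d \<psi> i))^2) = real d ^ card \<delta> * (\<Sum>x1\<in>cfgS \<delta> d. \<Sum>y1\<in>cfgS \<delta> d. (cmod (Mred n d \<psi> \<delta> x1 y1))^2)"
    by (rule parseval_cc[OF g \<delta>])
  also have "\<dots> \<le> real d ^ card \<delta> * 1"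
    using Mred_bound[OF \<delta>, of d \<psi>] nrm by (intro mult_left_mono) auto
  finally show ?thesis by simp
qed

lemma cc_full:
  assumes g: "gm_basis d lam" and nrm: "(\<Sum>x\<in>cfgS {..<n} d. (cmod (\<psi> x))^2) = 1"
  shows "(\<Sum>i\<in>cfgS {..<n} (d^2). (cmod (cc lam n d \<psi> i))^2) = real d ^ n"
  using parseval_cc[OF g order_refl, of n \<psi>] Mred_full[of n d \<psi>] nrm by simp

lemma cc_sym:
  assumes g: "gm_basis d lam" and \<delta>: "\<delta> \<subseteq> {..<n}"
  shows "(\<Sum>i\<in>cfgS \<delta> (d^2). (cmod (cc lam n d \<psi> i))^2) * real d ^ card ({..<n} - \<delta>)
       = (\<Sum>i\<in>cfgS ({..<n} - \<delta>) (d^2). (cmod (cc lam n d \<psi> i))^2) * real d ^ card \<delta>"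
  using parseval_cc[OF g \<delta>, of \<psi>] parseval_cc[OF g Diff_subset[of "{..<n}" \<delta>], of \<psi>] Mred_swap[OF \<delta>, of d \<psi>]
  by (simp add: algebra_simps)


lemma restr_cadd_left: "x1 \<in> cfgS S D \<Longrightarrow> x2 \<in> cfgS T D' \<Longrightarrow> S \<inter> T = {} \<Longrightarrow> restr S (cadd x1 x2) = x1"
  by (auto simp: restr_def cadd_def cfgS_def fun_eq_iff)
lemma restr_cadd_right: "x1 \<in> cfgS S D \<Longrightarrow> x2 \<in> cfgS T D' \<Longrightarrow> S \<inter> T = {} \<Longrightarrow> restr T (cadd x1 x2) = x2"
  by (auto simp: restr_def cadd_def cfgS_def fun_eq_iff)
lemma cadd_in: "x1 \<in> cfgS S D \<Longrightarrow> x2 \<in> cfgS T D \<Longrightarrow> S \<inter> T = {} \<Longrightarrow> cadd x1 x2 \<in> cfgS (S \<union> T) D"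
  by (auto simp: cadd_def cfgS_def)

lemma sum4_prod: "(\<Sum>x1\<in>X1. \<Sum>x2\<in>X2. \<Sum>y1\<in>Y1. \<Sum>y2\<in>Y2. A x1 y1 * B x2 y2)
   = (\<Sum>x1\<in>X1. \<Sum>y1\<in>Y1. A x1 y1) * (\<Sum>x2\<in>X2. \<Sum>y2\<in>Y2. (B x2 y2 :: complex))"
proof -
  have "(\<Sum>x1\<in>X1. \<Sum>x2\<in>X2. \<Sum>y1\<in>Y1. \<Sum>y2\<in>Y2. A x1 y1 * B x2 y2)
      = (\<Sum>x1\<in>X1. \<Sum>y1\<in>Y1. \<Sum>x2\<in>X2. \<Sum>y2\<in>Y2. A x1 y1 * B x2 y2)"
    by (rule sum.cong[OF refl], rule sum.swap)
  also have "\<dots> = (\<Sum>x1\<in>X1. \<Sum>y1\<in>Y1. A x1 y1 * (\<Sum>x2\<in>X2. \<Sum>y2\<in>Y2. B x2 y2))"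
    by (simp add: sum_distrib_left)
  also have "\<dots> = (\<Sum>x1\<in>X1. \<Sum>y1\<in>Y1. A x1 y1) * (\<Sum>x2\<in>X2. \<Sum>y2\<in>Y2. B x2 y2)"
    by (simp add: sum_distrib_right)
  finally show ?thesis .
qed

definition Pf :: "(nat \<Rightarrow> nat \<Rightarrow> nat \<Rightarrow> complex) \<Rightarrow> nat \<Rightarrow> nat set \<Rightarrow> ((nat \<Rightarrow> nat) \<Rightarrow> complex) \<Rightarrow> (nat \<Rightarrow> nat) \<Rightarrow> complex" where
  "Pf lam d S f u = (\<Sum>x1\<in>cfgS S d. \<Sum>y1\<in>cfgS S d. (f x1 * cnj (f y1)) * LamS lam S u y1 x1)"

lemma cc_prod:
  assumes \<beta>: "\<beta> \<subseteq> {..<n}"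
    and h\<psi>: "\<forall>x\<in>cfgS {..<n} d. \<psi> x = f (restr \<beta> x) * g (restr ({..<n} - \<beta>) x)"
    and u: "u \<in> cfgS \<beta> D1" and v: "v \<in> cfgS ({..<n} - \<beta>) D2"
  shows "cc lam n d \<psi> (cadd u v) = Pf lam d \<beta> f u * Pf lam d ({..<n} - \<beta>) g v"
proof -
  define R where "R = {..<n} - \<beta>"
  have N: "{..<n} = \<beta> \<union> R" and disj: "\<beta> \<inter> R = {}" using \<beta> unfolding R_def by auto
  have fin: "finite \<beta>" "finite R" using \<beta> unfolding R_def by (auto intro: finite_subset)
  have h\<psi>': "\<psi> (cadd x1 x2) = f x1 * g x2" if "x1 \<in> cfgS \<beta> d" "x2 \<in> cfgS R d" for x1 x2
  proof -
    have "cadd x1 x2 \<in> cfgS {..<n} d" using cadd_in[OF that disj] N by simp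
    hence "\<psi> (cadd x1 x2) = f (restr \<beta> (cadd x1 x2)) * g (restr R (cadd x1 x2))"
      using bspec[OF h\<psi>] unfolding R_def by blast
    thus ?thesis using restr_cadd_left[OF that disj] restr_cadd_right[OF that disj] by simp
  qed
  have "cc lam n d \<psi> (cadd u v) = (\<Sum>x1\<in>cfgS \<beta> d. \<Sum>x2\<in>cfgS R d. \<Sum>y1\<in>cfgS \<beta> d. \<Sum>y2\<in>cfgS R d.
      (\<psi> (cadd x1 x2) * cnj (\<psi> (cadd y1 y2))) * LamS lam (\<beta> \<union> R) (cadd u v) (cadd y1 y2) (cadd x1 x2))"
    unfolding cc_def N by (rule sum_split2[OF disj])
  also have "\<dots> = (\<Sum>x1\<in>cfgS \<beta> d. \<Sum>x2\<in>cfgS R d. \<Sum>y1\<in>cfgS \<beta> d. \<Sum>y2\<in>cfgS R d.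
      ((f x1 * cnj (f y1)) * LamS lam \<beta> u y1 x1) * ((g x2 * cnj (g y2)) * LamS lam R v y2 x2))"
  proof (intro sum.cong refl)
    fix x1 x2 y1 y2 assume h: "x1 \<in> cfgS \<beta> d" "x2 \<in> cfgS R d" "y1 \<in> cfgS \<beta> d" "y2 \<in> cfgS R d"
    have "\<psi> (cadd x1 x2) = f x1 * g x2" by (rule h\<psi>'[OF h(1,2)])
    moreover have "\<psi> (cadd y1 y2) = f y1 * g y2" by (rule h\<psi>'[OF h(3,4)])
    moreover have "LamS lam (\<beta> \<union> R) (cadd u v) (cadd y1 y2) (cadd x1 x2) = LamS lam \<beta> u y1 x1 * LamS lam R v y2 x2"
      by (rule LamS_split[OF fin disj h(1) h(3) h(2) h(4) u v[folded R_def]])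
    ultimately show "(\<psi> (cadd x1 x2) * cnj (\<psi> (cadd y1 y2))) * LamS lam (\<beta> \<union> R) (cadd u v) (cadd y1 y2) (cadd x1 x2) =
      ((f x1 * cnj (f y1)) * LamS lam \<beta> u y1 x1) * ((g x2 * cnj (g y2)) * LamS lam R v y2 x2)"
      by (simp add: mult_ac)
  qed
  also have "\<dots> = Pf lam d \<beta> f u * Pf lam d R g v" unfolding Pf_def by (rule sum4_prod)
  finally show ?thesis unfolding R_def .
qed

lemma cc_mult:
  assumes \<beta>: "\<beta> \<subseteq> {..<n}"
    and h\<psi>: "\<forall>x\<in>cfgS {..<n} d. \<psi> x = f (restr \<beta> x) * g (restr ({..<n} - \<beta>) x)"
    and nrm: "(\<Sum>x\<in>cfgS {..<n} d. (cmod (\<psi> x))^2) = 1"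
    and u: "u \<in> cfgS \<beta> D" and v: "v \<in> cfgS ({..<n} - \<beta>) D"
  shows "cc lam n d \<psi> (cadd u v) = cc lam n d \<psi> u * cc lam n d \<psi> v"
proof -
  let ?R = "{..<n} - \<beta>"
  have z1: "(\<lambda>_. 0) \<in> cfgS \<beta> 1" and z2: "(\<lambda>_. 0) \<in> cfgS ?R 1" by (auto simp: cfgS_def)
  have cu: "cc lam n d \<psi> u = Pf lam d \<beta> f u * Pf lam d ?R g (\<lambda>_. 0)"
    using cc_prod[OF \<beta> h\<psi> u z2] by simp
  have cv: "cc lam n d \<psi> v = Pf lam d \<beta> f (\<lambda>_. 0) * Pf lam d ?R g v"
    using cc_prod[OF \<beta> h\<psi> z1 v] by simp
  have c0: "Pf lam d \<beta> f (\<lambda>_. 0) * Pf lam d ?R g (\<lambda>_. 0) = 1"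
    using cc_prod[OF \<beta> h\<psi> z1 z2, of lam] cc_zero_norm[OF nrm, of lam] by simp
  have "cc lam n d \<psi> (cadd u v) = Pf lam d \<beta> f u * Pf lam d ?R g v" by (rule cc_prod[OF \<beta> h\<psi> u v])
  also have "\<dots> = Pf lam d \<beta> f u * Pf lam d ?R g v * (Pf lam d \<beta> f (\<lambda>_. 0) * Pf lam d ?R g (\<lambda>_. 0))"
    using c0 by simp
  also have "\<dots> = cc lam n d \<psi> u * cc lam n d \<psi> v" unfolding cu cv by (simp add: mult_ac)
  finally show ?thesis .
qed

lemma sum_split_N:
  assumes \<beta>: "\<beta> \<subseteq> {..<n}"
  shows "(\<Sum>i\<in>cfgS {..<n} D. F i) = (\<Sum>u\<in>cfgS \<beta> D. \<Sum>v\<in>cfgS ({..<n} - \<beta>) D. F (cadd u v))"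
proof -
  have N: "{..<n} = \<beta> \<union> ({..<n} - \<beta>)" and disj: "\<beta> \<inter> ({..<n} - \<beta>) = {}" using \<beta> by auto
  show ?thesis by (subst N, rule sum_cfgS_split[OF disj])
qed


definition supp :: "(nat \<Rightarrow> nat) \<Rightarrow> nat set" where "supp i = {k. i k \<noteq> 0}"

definition Cp :: "(nat \<Rightarrow> nat \<Rightarrow> nat \<Rightarrow> complex) \<Rightarrow> nat \<Rightarrow> nat \<Rightarrow> ((nat \<Rightarrow> nat) \<Rightarrow> complex) \<Rightarrow> real" where
  "Cp lam n d \<psi> = (\<Sum>i\<in>cfgS {..<n} (d^2). (if n - 1 \<le> card (supp i) then (cmod (cc lam n d \<psi> i))^2 else 0))"

lemma supp_sub: "i \<in> cfgS S D \<Longrightarrow> supp i \<subseteq> S" by (auto simp: supp_def cfgS_def)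
lemma supp_zero[simp]: "supp (\<lambda>_. 0) = {}" by (simp add: supp_def)
lemma supp_empty_iff: "(supp i = {}) = (i = (\<lambda>_. 0))" by (auto simp: supp_def fun_eq_iff)

lemma card_supp_le: "finite S \<Longrightarrow> i \<in> cfgS S D \<Longrightarrow> card (supp i) \<le> card S"
  by (rule card_mono) (auto dest: supp_sub)

lemma card_supp_cadd:
  assumes "u \<in> cfgS S D" "v \<in> cfgS T D" "S \<inter> T = {}" "finite S" "finite T"
  shows "card (supp (cadd u v)) = card (supp u) + card (supp v)"
proof -
  have "supp (cadd u v) = supp u \<union> supp v" by (auto simp: supp_def cadd_def)
  moreover have "supp u \<inter> supp v = {}" using supp_sub[OF assms(1)] supp_sub[OF assms(2)] assms(3) by auto
  moreover have "finite (supp u)" "finite (supp v)"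
    using supp_sub[OF assms(1)] supp_sub[OF assms(2)] assms(4,5) by (auto intro: finite_subset)
  ultimately show ?thesis by (simp add: card_Un_disjoint)
qed

lemma sum_nz:
  fixes h :: "'a \<Rightarrow> real"
  assumes "finite A" "z \<in> A"
  shows "(\<Sum>u\<in>A. (if u \<noteq> z then h u else 0)) = (\<Sum>u\<in>A. h u) - h z"
proof -
  have "(\<Sum>u\<in>A. h u) = (\<Sum>u\<in>A. (if u \<noteq> z then h u else 0) + (if u = z then h u else 0))"
    by (intro sum.cong refl) auto
  also have "\<dots> = (\<Sum>u\<in>A. (if u \<noteq> z then h u else 0)) + h z"
    using assms by (simp add: sum.distrib sum.delta')
  finally show ?thesis by simp
qed

locale bip =
  fixes lam n d \<psi> \<beta> f g
  assumes gm: "gm_basis d lam" and d2: "d \<ge> 2" and n3: "n \<ge> 3"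
    and \<beta>: "\<beta> \<subseteq> {..<n}"
    and h\<psi>: "\<forall>x\<in>cfgS {..<n} d. \<psi> x = f (restr \<beta> x) * g (restr ({..<n} - \<beta>) x)"
    and nrm: "(\<Sum>x\<in>cfgS {..<n} d. (cmod (\<psi> x))^2) = 1"
begin

abbreviation "R \<equiv> {..<n} - \<beta>"
abbreviation "c \<equiv> cc lam n d \<psi>"
abbreviation "Z \<equiv> (\<lambda>_::nat. 0::nat)"

lemma finb: "finite \<beta>" using \<beta> by (auto intro: finite_subset)
lemma finR: "finite R" by simp
lemma disj: "\<beta> \<inter> R = {}" by auto
lemma cardR: "card R = n - card \<beta>" using \<beta> by (simp add: card_Diff_subset finb)
lemma dpos: "d^2 > 0" using d2 by simp
lemma Zb: "Z \<in> cfgS S (d^2)" using dpos by (simp add: cfgS_def)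
lemma c0: "c Z = 1" using cc_zero_norm[OF nrm] .

lemma Cp_split:
  "Cp lam n d \<psi> = (\<Sum>u\<in>cfgS \<beta> (d^2). \<Sum>v\<in>cfgS R (d^2).
      (if n - 1 \<le> card (supp u) + card (supp v) then (cmod (c u))^2 * (cmod (c v))^2 else 0))"
  unfolding Cp_def
proof (subst sum_split_N[OF \<beta>], intro sum.cong refl)
  fix u v assume u: "u \<in> cfgS \<beta> (d^2)" and v: "v \<in> cfgS R (d^2)"
  show "(if n - 1 \<le> card (supp (cadd u v)) then (cmod (c (cadd u v)))\<^sup>2 else 0) =
        (if n - 1 \<le> card (supp u) + card (supp v) then (cmod (c u))\<^sup>2 * (cmod (c v))\<^sup>2 else 0)"
    using card_supp_cadd[OF u v disj finb finR] cc_mult[OF \<beta> h\<psi> nrm u v, of lam]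
    by (simp add: norm_mult power_mult_distrib)
qed

lemma Sb_ge1: "(\<Sum>u\<in>cfgS S (d^2). (cmod (c u))^2) \<ge> 1" if "finite S"
proof -
  have "(cmod (c Z))^2 \<le> (\<Sum>u\<in>cfgS S (d^2). (cmod (c u))^2)"
    by (rule member_le_sum) (auto simp: Zb finite_cfgS[OF that])
  thus ?thesis using c0 by simp
qed

lemma caseA:
  assumes k2: "card \<beta> \<ge> 2" and r2: "card R \<ge> 2"
  shows "Cp lam n d \<psi> \<le> (real d ^ card \<beta> - 1) * (real d ^ card R - 1)"
proof -
  let ?h = "\<lambda>u. (cmod (c u))^2"
  have "Cp lam n d \<psi> \<le> (\<Sum>u\<in>cfgS \<beta> (d^2). \<Sum>v\<in>cfgS R (d^2). (if u \<noteq> Z then ?h u else 0) * (if v \<noteq> Z then ?h v else 0))"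
    unfolding Cp_split
  proof (intro sum_mono)
    fix u v assume u: "u \<in> cfgS \<beta> (d^2)" and v: "v \<in> cfgS R (d^2)"
    have cu: "card (supp u) \<le> card \<beta>" by (rule card_supp_le[OF finb u])
    have cv: "card (supp v) \<le> card R" by (rule card_supp_le[OF finR v])
    have nb: "card \<beta> + card R = n" using cardR \<beta> card_mono[OF _ \<beta>] by simp
    show "(if n - 1 \<le> card (supp u) + card (supp v) then ?h u * ?h v else 0)
          \<le> (if u \<noteq> Z then ?h u else 0) * (if v \<noteq> Z then ?h v else 0)"
    proof (cases "n - 1 \<le> card (supp u) + card (supp v)")
      case True
      have "u \<noteq> Z"
      proof
        assume "u = Z" hence "card (supp u) = 0" by simp
        thus False using True cv nb k2 by linarith
      qed
      moreover have "v \<noteq> Z"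
      proof
        assume "v = Z" hence "card (supp v) = 0" by simp
        thus False using True cu nb r2 by linarith
      qed
      ultimately show ?thesis using True by simp
    qed simp
  qed
  also have "\<dots> = (\<Sum>u\<in>cfgS \<beta> (d^2). (if u \<noteq> Z then ?h u else 0)) * (\<Sum>v\<in>cfgS R (d^2). (if v \<noteq> Z then ?h v else 0))"
    by (simp add: sum_product)
  also have "\<dots> = ((\<Sum>u\<in>cfgS \<beta> (d^2). ?h u) - 1) * ((\<Sum>v\<in>cfgS R (d^2). ?h v) - 1)"
    using sum_nz[OF finite_cfgS[OF finb] Zb, of ?h] sum_nz[OF finite_cfgS[OF finR] Zb, of ?h] c0 by simp
  also have "\<dots> \<le> (real d ^ card \<beta> - 1) * (real d ^ card R - 1)"
    using cc_upper[OF gm \<beta> nrm] cc_upper[OF gm Diff_subset nrm] Sb_ge1[OF finb] Sb_ge1[OF finR]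
    by (intro mult_mono) auto
  finally show ?thesis .
qed

end

lemma boundA:
  fixes d :: nat
  assumes "d \<ge> 2" "k \<le> n"
  shows "(real d ^ k - 1) * (real d ^ (n - k) - 1) \<le> real d ^ n - 2 * real d powr (real n / 2) + 1"
proof -
  have e: "real d ^ k * real d ^ (n - k) = real d ^ n" using assms(2) by (simp add: power_add[symmetric])
  have "sqrt (real d ^ k * real d ^ (n - k)) \<le> (real d ^ k + real d ^ (n - k)) / 2"
    by (rule arith_geo_mean_sqrt) auto
  moreover have "real d powr (real n / 2) = sqrt (real d ^ n)"
    using assms(1) by (simp add: powr_half_sqrt_powr powr_realpow)
  ultimately have "2 * real d powr (real n / 2) \<le> real d ^ k + real d ^ (n - k)" using e by simp
  thus ?thesis using e by (simp add: algebra_simps)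
qed


lemma cfgS_mono: "S \<subseteq> T \<Longrightarrow> D > 0 \<Longrightarrow> cfgS S D \<subseteq> cfgS T D" by (auto simp: cfgS_def)

lemma arithB:
  fixes d m D L G :: real
  assumes "d \<ge> 2" "m \<ge> 2" "D \<ge> 1" "L \<ge> 1" "G \<ge> 0" "G \<ge> m * D - m * L"
  shows "d * L + G \<ge> d + (m + 1) / m * (D - 1)"
proof -
  have m0: "m > 0" using assms by simp
  have md: "m * d \<ge> m * 2" using assms by (intro mult_left_mono) auto
  have P1: "m * d - m - 1 \<ge> 0" using md assms by linarith
  have P: "(D - 1) * (m * d - m - 1) \<ge> 0" by (rule mult_nonneg_nonneg) (use assms P1 in linarith)+
  have mm: "m * m \<ge> m * 2" using assms by (intro mult_left_mono) auto
  have Q1: "m * m - m - 1 \<ge> 0" using mm assms by linarith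
  have Q: "(m * m - m - 1) * (D - 1) \<ge> 0" by (rule mult_nonneg_nonneg) (use assms Q1 in linarith)+
  have mdD: "m * (d * D) \<ge> m * d + (m + 1) * (D - 1)"
  proof -
    have id: "m * (d * D) - (m * d + (m + 1) * (D - 1)) = (D - 1) * (m * d - m - 1)" by (simp add: algebra_simps)
    show ?thesis using id P by linarith
  qed
  have key: "m * (d * L + G) \<ge> m * d + (m + 1) * (D - 1)"
  proof (cases "L \<ge> D")
    case True
    have "d * D \<le> d * L" using True assms by (intro mult_left_mono) auto
    hence "d * D \<le> d * L + G" using assms by linarith
    hence "m * (d * L + G) \<ge> m * (d * D)" using m0 by (intro mult_left_mono) auto
    thus ?thesis using mdD by linarith
  next
    case False
    have "d * L + G \<ge> d * L + m * D - m * L" using assms by linarith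
    hence h1: "m * (d * L + G) \<ge> m * (d * L + m * D - m * L)" using m0 by (intro mult_left_mono) auto
    have "m * (d * L + m * D - m * L) \<ge> m * d + (m + 1) * (D - 1)"
    proof (cases "d \<ge> m")
      case True
      have f1: "(d - m) * L \<ge> (d - m) * 1" using True assms by (intro mult_left_mono) auto
      have f2: "m * ((d - m) * L - (d - m)) \<ge> 0" using f1 m0 by (intro mult_nonneg_nonneg) auto
      have id: "m * (d * L + m * D - m * L) - (m * d + (m + 1) * (D - 1)) = m * ((d - m) * L - (d - m)) + (m * m - m - 1) * (D - 1)"
        by (simp add: algebra_simps)
      show ?thesis using id f2 Q by linarith
    next
      case False2: False
      have f1: "(m - d) * L \<le> (m - d) * D" using False2 False by (intro mult_left_mono) auto
      have f2: "m * ((m - d) * D - (m - d) * L) \<ge> 0" using f1 m0 by (intro mult_nonneg_nonneg) auto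
      have id: "m * (d * L + m * D - m * L) - m * (d * D) = m * ((m - d) * D - (m - d) * L)"
        by (simp add: algebra_simps)
      show ?thesis using id f2 mdD by linarith
    qed
    thus ?thesis using h1 by linarith
  qed
  have "d + (m + 1) / m * (D - 1) = (m * d + (m + 1) * (D - 1)) / m" using m0 by (simp add: field_simps)
  also have "\<dots> \<le> (m * (d * L + G)) / m" using key m0 by (intro divide_right_mono) auto
  also have "\<dots> = d * L + G" using m0 by simp
  finally show ?thesis .
qed

context bip
begin

lemma full_factor: "real d ^ n = (\<Sum>u\<in>cfgS \<beta> (d^2). (cmod (c u))^2) * (\<Sum>v\<in>cfgS R (d^2). (cmod (c v))^2)"
proof -
  have "real d ^ n = (\<Sum>i\<in>cfgS {..<n} (d^2). (cmod (c i))^2)" using cc_full[OF gm nrm] by simp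
  also have "\<dots> = (\<Sum>u\<in>cfgS \<beta> (d^2). \<Sum>v\<in>cfgS R (d^2). (cmod (c u))^2 * (cmod (c v))^2)"
    by (subst sum_split_N[OF \<beta>], intro sum.cong refl)
       (simp add: cc_mult[OF \<beta> h\<psi> nrm] norm_mult power_mult_distrib)
  also have "\<dots> = (\<Sum>u\<in>cfgS \<beta> (d^2). (cmod (c u))^2) * (\<Sum>v\<in>cfgS R (d^2). (cmod (c v))^2)"
    by (simp add: sum_product)
  finally show ?thesis .
qed

lemma Sb_eq:
  shows "(\<Sum>u\<in>cfgS \<beta> (d^2). (cmod (c u))^2) \<ge> real d ^ card \<beta>"
proof -
  let ?S = "\<Sum>u\<in>cfgS \<beta> (d^2). (cmod (c u))^2"
  let ?T = "\<Sum>v\<in>cfgS R (d^2). (cmod (c v))^2"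
  have T: "?T \<le> real d ^ card R" by (rule cc_upper[OF gm Diff_subset nrm])
  have S0: "?S \<ge> 0" by (intro sum_nonneg) auto
  have nb: "card \<beta> + card R = n" using cardR \<beta> card_mono[OF _ \<beta>] by simp
  have "real d ^ card \<beta> * real d ^ card R = ?S * ?T" using full_factor nb by (simp add: power_add[symmetric])
  also have "\<dots> \<le> ?S * real d ^ card R" using T S0 by (rule mult_left_mono)
  finally show ?thesis using d2 by simp
qed

end


context bip
begin

lemma cfgS_minus: "j \<in> R \<Longrightarrow> cfgS (R - {j}) (d^2) = {v \<in> cfgS R (d^2). v j = 0}"
  using dpos by (auto simp: cfgS_def)

lemma caseB:
  assumes k1: "card \<beta> = 1"
  shows "Cp lam n d \<psi> \<le> (real d - 1) * (real d ^ (n - 1) - 1) + real d ^ (n - 1) - 1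
          - real n / (real n - 1) * (real d ^ (n - 3) - 1)"
proof -
  obtain b where bb: "\<beta> = {b}" using k1 card_1_singletonE by blast
  have cR: "card R = n - 1" using cardR k1 by simp
  define h where "h v = (cmod (c v))^2" for v
  have h0: "h v \<ge> 0" for v unfolding h_def by simp
  have hZ: "h Z = 1" unfolding h_def using c0 by simp
  define F where "F = (\<Sum>v\<in>cfgS R (d^2). (if n - 1 \<le> card (supp v) then h v else 0))"
  define H where "H = (\<Sum>v\<in>cfgS R (d^2). (if n - 2 \<le> card (supp v) then h v else 0))"
  define Tot where "Tot = (\<Sum>v\<in>cfgS R (d^2). h v)"
  define Sb where "Sb = (\<Sum>u\<in>cfgS \<beta> (d^2). h u)"
  have finb': "finite (cfgS \<beta> (d^2))" and finR': "finite (cfgS R (d^2))" using finite_cfgS finb finR by auto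
  have "Cp lam n d \<psi> = (\<Sum>u\<in>cfgS \<beta> (d^2). h u * (if u = Z then F else H))"
    unfolding Cp_split h_def[symmetric]
  proof (intro sum.cong refl)
    fix u assume u: "u \<in> cfgS \<beta> (d^2)"
    show "(\<Sum>v\<in>cfgS R (d^2). (if n - 1 \<le> card (supp u) + card (supp v) then h u * h v else 0)) = h u * (if u = Z then F else H)"
    proof (cases "u = Z")
      case True
      thus ?thesis unfolding F_def by (simp add: sum_distrib_left if_distrib cong: if_cong)
    next
      case False
      have "supp u \<subseteq> {b}" using supp_sub[OF u] bb by simp
      moreover have "supp u \<noteq> {}" using False supp_empty_iff by blast
      ultimately have "supp u = {b}" by blast
      hence cs: "card (supp u) = 1" by simp
      have "(\<Sum>v\<in>cfgS R (d^2). (if n - 1 \<le> card (supp u) + card (supp v) then h u * h v else 0))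
          = (\<Sum>v\<in>cfgS R (d^2). h u * (if n - 2 \<le> card (supp v) then h v else 0))"
        using n3 cs by (intro sum.cong refl) auto
      thus ?thesis using False unfolding H_def by (simp add: sum_distrib_left)
    qed
  qed
  also have "\<dots> = (\<Sum>u\<in>cfgS \<beta> (d^2). h u * H + (if u = Z then h u * (F - H) else 0))"
    by (intro sum.cong refl) (auto simp: algebra_simps)
  also have "\<dots> = Sb * H + (F - H)"
    using finb' Zb hZ unfolding Sb_def by (simp add: sum.distrib sum_distrib_right sum.delta')
  finally have Cpe: "Cp lam n d \<psi> = Sb * H + (F - H)" .
  have Sb_le: "Sb \<le> real d" using cc_upper[OF gm \<beta> nrm] k1 unfolding Sb_def h_def by simp
  have Sb_ge: "Sb \<ge> real d" using Sb_eq k1 unfolding Sb_def h_def by simp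
  have Tot_le: "Tot \<le> real d ^ (n - 1)" using cc_upper[OF gm Diff_subset[of "{..<n}" \<beta>] nrm] cR unfolding Tot_def h_def by simp
  have FH: "F \<le> H" unfolding F_def H_def using h0 by (intro sum_mono) auto
  have H0: "H \<ge> 0" unfolding H_def using h0 by (intro sum_nonneg) auto
  have L1: "Tot - H \<ge> 1"
  proof -
    have "Tot - H = (\<Sum>v\<in>cfgS R (d^2). (if n - 2 \<le> card (supp v) then 0 else h v))"
      unfolding Tot_def H_def by (simp add: sum_subtractf[symmetric] if_distrib cong: if_cong)
    also have "\<dots> \<ge> (if n - 2 \<le> card (supp Z) then 0 else h Z)"
      by (rule member_le_sum) (use finR' Zb h0 in auto)
    finally show ?thesis using n3 hZ by simp
  qed
  have N2: "(\<Sum>v\<in>cfgS (R - {j}) (d^2). h v) \<ge> real d ^ (n - 3)" if j: "j \<in> R" for j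
  proof -
    define \<delta> where "\<delta> = R - {j}"
    have \<delta>s: "\<delta> \<subseteq> {..<n}" unfolding \<delta>_def by auto
    have bj: "b \<noteq> j" using j bb by auto
    have comp: "{..<n} - \<delta> = {b} \<union> {j}" using j bb \<beta> unfolding \<delta>_def by auto
    have cd: "card \<delta> = n - 2" unfolding \<delta>_def using cR j by (simp add: card_Diff_singleton)
    have cc2: "card ({..<n} - \<delta>) = 2" unfolding comp using bj by simp
    have "(\<Sum>i\<in>cfgS ({b} \<union> {j}) (d^2). h i) = (\<Sum>u\<in>cfgS {b} (d^2). \<Sum>w\<in>cfgS {j} (d^2). h (cadd u w))"
      using bj by (intro sum_cfgS_split) auto
    also have "\<dots> = (\<Sum>u\<in>cfgS {b} (d^2). \<Sum>w\<in>cfgS {j} (d^2). h u * h w)"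
    proof (intro sum.cong refl)
      fix u w assume u: "u \<in> cfgS {b} (d^2)" and w: "w \<in> cfgS {j} (d^2)"
      have u': "u \<in> cfgS \<beta> (d^2)" using u bb by simp
      have w': "w \<in> cfgS R (d^2)" using cfgS_mono[of "{j}" R "d^2"] j dpos w by auto
      show "h (cadd u w) = h u * h w" unfolding h_def
        by (simp add: cc_mult[OF \<beta> h\<psi> nrm u' w'] norm_mult power_mult_distrib)
    qed
    also have "\<dots> = Sb * (\<Sum>w\<in>cfgS {j} (d^2). h w)" unfolding Sb_def bb by (simp add: sum_product)
    also have "\<dots> \<ge> real d * 1"
      using Sb_ge Sb_ge1[of "{j}"] unfolding h_def by (intro mult_mono) auto
    finally have big: "(\<Sum>i\<in>cfgS ({..<n} - \<delta>) (d^2). h i) \<ge> real d" unfolding comp by simp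
    have sym: "(\<Sum>i\<in>cfgS \<delta> (d^2). h i) * real d ^ 2 = (\<Sum>i\<in>cfgS ({..<n} - \<delta>) (d^2). h i) * real d ^ (n - 2)"
      using cc_sym[OF gm \<delta>s, of \<psi>] cd cc2 unfolding h_def by simp
    have e1: "n - 3 + 2 = 1 + (n - 2)" using n3 by auto
    have "real d ^ (n - 3) * real d ^ 2 = real d ^ (n - 3 + 2)" by (rule power_add[symmetric])
    also have "\<dots> = real d ^ (1 + (n - 2))" unfolding e1 ..
    also have "\<dots> = real d * real d ^ (n - 2)" by (simp add: power_add)
    also have "\<dots> \<le> (\<Sum>i\<in>cfgS ({..<n} - \<delta>) (d^2). h i) * real d ^ (n - 2)"
      using big by (intro mult_right_mono) auto
    also have "\<dots> = (\<Sum>i\<in>cfgS \<delta> (d^2). h i) * real d ^ 2" using sym by simp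
    finally have "real d ^ (n - 3) * real d ^ 2 \<le> (\<Sum>i\<in>cfgS \<delta> (d^2). h i) * real d ^ 2" .
    thus ?thesis unfolding \<delta>_def using d2 by (simp add: mult_le_cancel_right)
  qed
  have cnt: "(\<Sum>j\<in>R. \<Sum>v\<in>cfgS (R - {j}) (d^2). h v) \<le> (H - F) + real (n - 1) * (Tot - H)"
  proof -
    have "(\<Sum>j\<in>R. \<Sum>v\<in>cfgS (R - {j}) (d^2). h v) = (\<Sum>j\<in>R. \<Sum>v\<in>cfgS R (d^2). (if v j = 0 then h v else 0))"
      by (rule sum.cong[OF refl]) (simp add: cfgS_minus sum.inter_filter[OF finR'])
    also have "\<dots> = (\<Sum>v\<in>cfgS R (d^2). \<Sum>j\<in>R. (if v j = 0 then h v else 0))" by (rule sum.swap)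
    also have "\<dots> = (\<Sum>v\<in>cfgS R (d^2). real (card R - card (supp v)) * h v)"
    proof (intro sum.cong refl)
      fix v assume v: "v \<in> cfgS R (d^2)"
      have e: "{j\<in>R. v j = 0} = R - supp v" by (auto simp: supp_def)
      have fs: "finite (supp v)" using finite_subset[OF supp_sub[OF v] finR] .
      have "(\<Sum>j\<in>R. (if v j = 0 then h v else 0)) = (\<Sum>j\<in>{j\<in>R. v j = 0}. h v)"
        by (rule sum.inter_filter[OF finR, symmetric])
      also have "\<dots> = real (card {j\<in>R. v j = 0}) * h v" by simp
      also have "card {j\<in>R. v j = 0} = card R - card (supp v)" unfolding e
        using supp_sub[OF v] fs by (simp add: card_Diff_subset)
      finally show "(\<Sum>j\<in>R. (if v j = 0 then h v else 0)) = real (card R - card (supp v)) * h v" .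
    qed
    also have "\<dots> \<le> (\<Sum>v\<in>cfgS R (d^2). ((if n - 2 \<le> card (supp v) then h v else 0) - (if n - 1 \<le> card (supp v) then h v else 0))
                  + real (n - 1) * (h v - (if n - 2 \<le> card (supp v) then h v else 0)))"
    proof (rule sum_mono)
      fix v assume v: "v \<in> cfgS R (d^2)"
      have cs: "card (supp v) \<le> n - 1" using card_supp_le[OF finR v] cR by simp
      show "real (card R - card (supp v)) * h v \<le> ((if n - 2 \<le> card (supp v) then h v else 0) - (if n - 1 \<le> card (supp v) then h v else 0))
                  + real (n - 1) * (h v - (if n - 2 \<le> card (supp v) then h v else 0))"
      proof (cases "n - 1 \<le> card (supp v)")
        case True
        hence "card (supp v) = n - 1" using cs by simp
        moreover have "n - 2 \<le> n - 1" by simp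
        ultimately show ?thesis using cR n3 by simp
      next
        case False
        show ?thesis
        proof (cases "n - 2 \<le> card (supp v)")
          case True
          hence "card (supp v) = n - 2" using False by simp
          hence "card R - card (supp v) = 1" using cR n3 by simp
          thus ?thesis using True False by simp
        next
          case False2: False
          have "real (card R - card (supp v)) \<le> real (n - 1)" using cR by simp
          hence "real (card R - card (supp v)) * h v \<le> real (n - 1) * h v" using h0 by (rule mult_right_mono)
          thus ?thesis using False False2 by simp
        qed
      qed
    qed
    also have "\<dots> = (H - F) + real (n - 1) * (Tot - H)"
      unfolding H_def F_def Tot_def by (simp only: sum.distrib sum_subtractf sum_distrib_left[symmetric])
    finally show ?thesis .
  qed
  have low: "real (n - 1) * real d ^ (n - 3) \<le> (H - F) + real (n - 1) * (Tot - H)"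
  proof -
    have "real (n - 1) * real d ^ (n - 3) = (\<Sum>j\<in>R. real d ^ (n - 3))" using cR by simp
    also have "\<dots> \<le> (\<Sum>j\<in>R. \<Sum>v\<in>cfgS (R - {j}) (d^2). h v)" using N2 by (intro sum_mono) auto
    finally show ?thesis using cnt by linarith
  qed
  have D1: "real d ^ (n - 3) \<ge> 1" using d2 by (intro one_le_power) auto
  have m2: "real (n - 1) \<ge> 2" using n3 by simp
  have ar: "real d * (Tot - H) + (H - F) \<ge> real d + (real (n - 1) + 1) / real (n - 1) * (real d ^ (n - 3) - 1)"
    by (rule arithB) (use d2 m2 D1 L1 FH low in \<open>auto simp: algebra_simps\<close>)
  have eqm: "real (n - 1) = real n - 1" using n3 by (simp add: of_nat_diff)
  have ar': "real d * (Tot - H) + (H - F) \<ge> real d + real n / (real n - 1) * (real d ^ (n - 3) - 1)"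
    using ar unfolding eqm by simp
  have sbh: "Sb * H \<le> real d * H" using Sb_le H0 by (rule mult_right_mono)
  have dt: "real d * Tot \<le> real d * real d ^ (n - 1)" using Tot_le by (intro mult_left_mono) auto
  have id1: "real d * (Tot - H) = real d * Tot - real d * H" by (simp add: algebra_simps)
  have id2: "(real d - 1) * (real d ^ (n - 1) - 1) = real d * real d ^ (n - 1) - real d - real d ^ (n - 1) + 1"
    by (simp add: algebra_simps)
  show ?thesis unfolding Cpe using sbh dt id1 id2 ar' by linarith
qed

end


lemma pure_bound:
  assumes g: "gm_basis d lam" and d2: "d \<ge> 2" and n3: "n \<ge> 3" and pb: "pure_biprod n d \<psi>"
  shows "Cp lam n d \<psi> \<le> max (real d ^ n - 2 * real d powr (real n / 2) + 1)
        ((real d - 1) * (real d ^ (n - 1) - 1) + real d ^ (n - 1) - 1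
          - real n / (real n - 1) * (real d ^ (n - 3) - 1))"
proof -
  have nrm: "(\<Sum>x\<in>cfgS {..<n} d. (cmod (\<psi> x))^2) = 1" using pb unfolding pure_biprod_def cfg_eq by blast
  obtain \<beta> f g where \<beta>: "\<beta> \<subseteq> {..<n}" "\<beta> \<noteq> {}" "\<beta> \<noteq> {..<n}"
    and h\<psi>: "\<forall>x\<in>cfgS {..<n} d. \<psi> x = f (restr \<beta> x) * g (restr ({..<n} - \<beta>) x)"
    using pb unfolding pure_biprod_def cfg_eq by blast
  interpret B1: bip lam n d \<psi> \<beta> f g by (rule bip.intro[OF g d2 n3 \<beta>(1) h\<psi> nrm])
  have e: "{..<n} - ({..<n} - \<beta>) = \<beta>" using \<beta>(1) by auto
  have h\<psi>2: "\<forall>x\<in>cfgS {..<n} d. \<psi> x = g (restr ({..<n} - \<beta>) x) * f (restr ({..<n} - ({..<n} - \<beta>)) x)"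
    using h\<psi> unfolding e by (simp add: mult.commute)
  interpret B2: bip lam n d \<psi> "{..<n} - \<beta>" g f by (rule bip.intro[OF g d2 n3 Diff_subset h\<psi>2 nrm])
  have fb: "finite \<beta>" using B1.finb .
  have cb: "card \<beta> \<ge> 1" using \<beta>(2) fb by (simp add: Suc_le_eq card_gt_0_iff)
  have "{..<n} - \<beta> \<noteq> {}" using \<beta>(1,3) by blast
  hence cr: "card ({..<n} - \<beta>) \<ge> 1" by (simp add: Suc_le_eq card_gt_0_iff)
  have nb: "card ({..<n} - \<beta>) = n - card \<beta>" by (rule B1.cardR)
  show ?thesis
  proof (cases "card \<beta> = 1")
    case True thus ?thesis using B1.caseB by simp
  next
    case False
    show ?thesis
    proof (cases "card ({..<n} - \<beta>) = 1")
      case True thus ?thesis using B2.caseB by simp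
    next
      case False2: False
      have "Cp lam n d \<psi> \<le> (real d ^ card \<beta> - 1) * (real d ^ card ({..<n} - \<beta>) - 1)"
        using B1.caseA False False2 cb cr by simp
      also have "\<dots> \<le> real d ^ n - 2 * real d powr (real n / 2) + 1"
        unfolding nb by (rule boundA[OF d2]) (use card_mono[OF _ \<beta>(1)] in simp)
      finally show ?thesis by simp
    qed
  qed
qed

lemma jensen_sq:
  fixes p r :: "nat \<Rightarrow> real"
  assumes "\<forall>j<m. p j \<ge> 0" "(\<Sum>j<m. p j) = 1"
  shows "(\<Sum>j<m. p j * r j)^2 \<le> (\<Sum>j<m. p j * (r j)^2)"
proof -
  have "(\<Sum>j<m. p j * r j) = (\<Sum>j<m. sqrt (p j) * (sqrt (p j) * r j))"
    using assms(1) by (intro sum.cong refl) (simp add: mult.assoc[symmetric])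
  hence "(\<Sum>j<m. p j * r j)^2 \<le> (\<Sum>j<m. (sqrt (p j))^2) * (\<Sum>j<m. (sqrt (p j) * r j)^2)"
    using Cauchy_Schwarz_ineq_sum[of "\<lambda>j. sqrt (p j)" "\<lambda>j. sqrt (p j) * r j" "{..<m}"] by simp
  also have "(\<Sum>j<m. (sqrt (p j))^2) = 1" using assms by simp
  also have "(\<Sum>j<m. (sqrt (p j) * r j)^2) = (\<Sum>j<m. p j * (r j)^2)"
    using assms(1) by (intro sum.cong refl) (simp add: power_mult_distrib)
  finally show ?thesis by simp
qed

lemma idx_eq:
  assumes "\<alpha> \<subseteq> {..<n}" "d \<ge> 1"
  shows "idx_tuples d \<alpha> = {i \<in> cfgS {..<n} (d^2). supp i = \<alpha>}"
proof -
  have d1: "d^2 \<ge> 1" using assms(2) by simp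
  show ?thesis
  proof (rule Set.set_eqI)
    fix i
    show "i \<in> idx_tuples d \<alpha> \<longleftrightarrow> i \<in> {i \<in> cfgS {..<n} (d^2). supp i = \<alpha>}"
    proof
      assume h: "i \<in> idx_tuples d \<alpha>"
      have a1: "\<forall>k\<in>\<alpha>. 1 \<le> i k \<and> i k \<le> d^2 - 1" and a2: "\<forall>k. k \<notin> \<alpha> \<longrightarrow> i k = 0"
        using h unfolding idx_tuples_def by auto
      have "\<forall>k\<in>{..<n}. i k < d^2"
      proof
        fix k assume "k \<in> {..<n}"
        show "i k < d^2"
        proof (cases "k \<in> \<alpha>")
          case True
          hence "i k \<le> d^2 - 1" using a1 by blast
          thus ?thesis using d1 by linarith
        next
          case False
          hence "i k = 0" using a2 by blast
          thus ?thesis using d1 by linarith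
        qed
      qed
      moreover have "\<forall>k. k \<notin> {..<n} \<longrightarrow> i k = 0" using a2 assms(1) by auto
      moreover have "supp i = \<alpha>" using a1 a2 unfolding supp_def by fastforce
      ultimately show "i \<in> {i \<in> cfgS {..<n} (d^2). supp i = \<alpha>}" unfolding cfgS_def by simp
    next
      assume h: "i \<in> {i \<in> cfgS {..<n} (d^2). supp i = \<alpha>}"
      have b1: "\<forall>k\<in>{..<n}. i k < d^2" and b2: "supp i = \<alpha>" using h unfolding cfgS_def by auto
      have "\<forall>k\<in>\<alpha>. 1 \<le> i k \<and> i k \<le> d^2 - 1"
      proof
        fix k assume k: "k \<in> \<alpha>"
        hence "i k \<noteq> 0" using b2 unfolding supp_def by auto
        moreover have "i k < d^2" using b1 k assms(1) by auto
        ultimately show "1 \<le> i k \<and> i k \<le> d^2 - 1" by auto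
      qed
      moreover have "\<forall>k. k \<notin> \<alpha> \<longrightarrow> i k = 0" using b2 unfolding supp_def by auto
      ultimately show "i \<in> idx_tuples d \<alpha>" unfolding idx_tuples_def by simp
    qed
  qed
qed

lemma corr_eq:
  assumes \<alpha>: "\<alpha> \<subseteq> {..<n}" and i: "i \<in> idx_tuples d \<alpha>"
    and \<rho>: "\<forall>x\<in>cfg n d. \<forall>y\<in>cfg n d. \<rho> x y = (\<Sum>j<m. complex_of_real (p j) * \<psi> j x * cnj (\<psi> j y))"
  shows "corr n d lam \<rho> \<alpha> i = (\<Sum>j<m. complex_of_real (p j) * cc lam n d (\<psi> j) i)"
proof -
  have op: "corr_op n lam \<alpha> i y x = LamS lam {..<n} i y x" for y x
    unfolding corr_op_def LamS_def
  proof (rule prod.cong[OF refl])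
    fix k assume "k \<in> {..<n}"
    show "(if k \<in> \<alpha> then lam (i k) (y k) (x k) else (if y k = x k then 1 else 0)) = lamE lam (i k) (y k) (x k)"
      using i unfolding idx_tuples_def lamE_def by auto
  qed
  have "corr n d lam \<rho> \<alpha> i = (\<Sum>x\<in>cfg n d. \<Sum>y\<in>cfg n d. (\<Sum>j<m. complex_of_real (p j) * \<psi> j x * cnj (\<psi> j y)) * LamS lam {..<n} i y x)"
    unfolding corr_def op using \<rho> by (intro sum.cong refl) auto
  also have "\<dots> = (\<Sum>x\<in>cfg n d. \<Sum>y\<in>cfg n d. \<Sum>j<m. complex_of_real (p j) * ((\<psi> j x * cnj (\<psi> j y)) * LamS lam {..<n} i y x))"
    by (rule sum.cong[OF refl], rule sum.cong[OF refl]) (simp add: sum_distrib_right mult.assoc)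
  also have "\<dots> = (\<Sum>j<m. \<Sum>x\<in>cfg n d. \<Sum>y\<in>cfg n d. complex_of_real (p j) * ((\<psi> j x * cnj (\<psi> j y)) * LamS lam {..<n} i y x))"
    by (rule swap3[symmetric])
  also have "\<dots> = (\<Sum>j<m. complex_of_real (p j) * cc lam n d (\<psi> j) i)"
    unfolding cc_def cfg_eq by (simp add: sum_distrib_left)
  finally show ?thesis .
qed

lemma regroup:
  assumes "d \<ge> 1"
  shows "(\<Sum>\<alpha>\<in>{\<alpha>. \<alpha> \<subseteq> {..<n} \<and> card \<alpha> \<ge> n - 1}. \<Sum>i\<in>idx_tuples d \<alpha>. F i)
       = (\<Sum>i\<in>cfgS {..<n} (d^2). (if n - 1 \<le> card (supp i) then F i else 0))"
proof -
  let ?A = "{\<alpha>. \<alpha> \<subseteq> {..<n} \<and> card \<alpha> \<ge> n - 1}"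
  let ?S = "{i \<in> cfgS {..<n} (d^2). n - 1 \<le> card (supp i)}"
  have fS: "finite ?S" using finite_cfgS[of "{..<n}" "d^2"] by simp
  have fA: "finite ?A" by (rule finite_subset[of _ "Pow {..<n}"]) auto
  have im: "supp ` ?S \<subseteq> ?A" by (auto dest: supp_sub)
  have "(\<Sum>\<alpha>\<in>?A. \<Sum>i\<in>idx_tuples d \<alpha>. F i) = (\<Sum>\<alpha>\<in>?A. \<Sum>i\<in>{x. x \<in> ?S \<and> supp x = \<alpha>}. F i)"
  proof (rule sum.cong[OF refl])
    fix \<alpha> assume a: "\<alpha> \<in> ?A"
    have "idx_tuples d \<alpha> = {x. x \<in> ?S \<and> supp x = \<alpha>}" using idx_eq[of \<alpha> n d] a assms by auto
    thus "(\<Sum>i\<in>idx_tuples d \<alpha>. F i) = (\<Sum>i\<in>{x. x \<in> ?S \<and> supp x = \<alpha>}. F i)" by simp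
  qed
  also have "\<dots> = (\<Sum>i\<in>?S. F i)" by (rule sum.group[OF fS fA im])
  also have "\<dots> = (\<Sum>i\<in>cfgS {..<n} (d^2). (if n - 1 \<le> card (supp i) then F i else 0))"
    by (rule sum.inter_filter[OF finite_cfgS]) simp
  finally show ?thesis .
qed

theorem corollary2:
  fixes n d :: nat and lam :: "nat \<Rightarrow> nat \<Rightarrow> nat \<Rightarrow> complex"
    and \<rho> :: "(nat \<Rightarrow> nat) \<Rightarrow> (nat \<Rightarrow> nat) \<Rightarrow> complex"
  assumes "n \<ge> 3" and "d \<ge> 2"
    and "gm_basis d lam"
    and "biseparable n d \<rho>"
  shows "C_nm1 n d lam \<rho> \<le>
    max (real d ^ n - 2 * real d powr (real n / 2) + 1)
        ((real d - 1) * (real d ^ (n - 1) - 1) + real d ^ (n - 1) - 1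
          - real n / (real n - 1) * (real d ^ (n - 3) - 1))"
proof -
  let ?M = "max (real d ^ n - 2 * real d powr (real n / 2) + 1)
        ((real d - 1) * (real d ^ (n - 1) - 1) + real d ^ (n - 1) - 1
          - real n / (real n - 1) * (real d ^ (n - 3) - 1))"
  obtain m :: nat and p :: "nat \<Rightarrow> real" and \<psi> :: "nat \<Rightarrow> (nat \<Rightarrow> nat) \<Rightarrow> complex" where p0: "\<forall>j<m. p j \<ge> (0::real)" and p1: "(\<Sum>j<m. p j) = 1"
    and pb: "\<forall>j<m. pure_biprod n d (\<psi> j)"
    and \<rho>: "\<forall>x\<in>cfg n d. \<forall>y\<in>cfg n d. \<rho> x y = (\<Sum>j<m. complex_of_real (p j) * \<psi> j x * cnj (\<psi> j y))"
    using assms(4) unfolding biseparable_def by blast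
  let ?A = "{\<alpha>. \<alpha> \<subseteq> {..<n} \<and> card \<alpha> \<ge> n - 1}"
  have d1: "d \<ge> 1" using assms(2) by simp
  have pt: "(Re (corr n d lam \<rho> \<alpha> i))^2 \<le> (\<Sum>j<m. p j * (cmod (cc lam n d (\<psi> j) i))^2)"
    if a: "\<alpha> \<in> ?A" and i: "i \<in> idx_tuples d \<alpha>" for \<alpha> i
  proof -
    have "Re (corr n d lam \<rho> \<alpha> i) = (\<Sum>j<m. p j * Re (cc lam n d (\<psi> j) i))"
      using corr_eq[OF _ i \<rho>] a by simp
    hence "(Re (corr n d lam \<rho> \<alpha> i))^2 \<le> (\<Sum>j<m. p j * (Re (cc lam n d (\<psi> j) i))^2)"
      using jensen_sq[OF p0 p1] by simp
    also have "\<dots> \<le> (\<Sum>j<m. p j * (cmod (cc lam n d (\<psi> j) i))^2)"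
      using p0 by (intro sum_mono mult_left_mono) (auto simp: cmod_power2)
    finally show ?thesis .
  qed
  have "C_nm1 n d lam \<rho> \<le> (\<Sum>\<alpha>\<in>?A. \<Sum>i\<in>idx_tuples d \<alpha>. \<Sum>j<m. p j * (cmod (cc lam n d (\<psi> j) i))^2)"
    unfolding C_nm1_def tau_sq_def using pt by (intro sum_mono) auto
  also have "\<dots> = (\<Sum>i\<in>cfgS {..<n} (d^2). (if n - 1 \<le> card (supp i) then (\<Sum>j<m. p j * (cmod (cc lam n d (\<psi> j) i))^2) else 0))"
    by (rule regroup[OF d1])
  also have "\<dots> = (\<Sum>j<m. p j * Cp lam n d (\<psi> j))"
  proof -
    let ?P = "\<lambda>i. n - 1 \<le> card (supp i)"
    let ?h = "\<lambda>j i. (cmod (cc lam n d (\<psi> j) i))^2"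
    have "(\<Sum>i\<in>cfgS {..<n} (d^2). (if ?P i then (\<Sum>j<m. p j * ?h j i) else 0))
        = (\<Sum>i\<in>cfgS {..<n} (d^2). \<Sum>j<m. p j * (if ?P i then ?h j i else 0))"
      by (rule sum.cong[OF refl]) simp
    also have "\<dots> = (\<Sum>j<m. \<Sum>i\<in>cfgS {..<n} (d^2). p j * (if ?P i then ?h j i else 0))"
      by (rule sum.swap)
    also have "\<dots> = (\<Sum>j<m. p j * Cp lam n d (\<psi> j))"
      unfolding Cp_def by (simp add: sum_distrib_left)
    finally show ?thesis .
  qed
  also have "\<dots> \<le> (\<Sum>j<m. p j * ?M)"
    using p0 pb pure_bound[OF assms(3) assms(2) assms(1)] by (intro sum_mono mult_left_mono) auto
  also have "\<dots> = ?M" using p1 by (simp add: sum_distrib_right[symmetric])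
  finally show ?thesis .
qed


end
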